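(* Let $c\in\mathbb{R}$, $\beta\geq0$, $q\in(0,1)$, $Q=q^2$, and let $J:\mathbb{Z}\to\mathbb{R}$ satisfy $$\sum_{i=-\infty}^0 \left(1+q^{2(i-c)}\frac{e^{\beta J(i-1)}}{e^{\beta |J(i)|}+q^2 e^{\beta |J(i-2)|}}\right)^{-1} + \sum_{i=1}^\infty \left(1+q^{-2(i-c)}\frac{e^{\beta J(i-1)}}{e^{\beta |J(i)|}+q^{-2} e^{\beta |J(i-2)|}}\right)^{-1}<\infty.$$ Then for every $n\in\mathbb{Z}$, $$Z^{J}_{\beta,q,c}\,\mu_{J}^c\Big(\mathbb{1}_{\{N=0\}}e^{-\beta H^{(n)}_{J}}\Big) = e^{-\beta J(n)} + \sum_{L,R>0}\sum_{\substack{\ell_1,\dots,\ell_L\geq 1 \\ m_1,\dots,m_{R}\geq 1}}\mathbb{1}_{\{\sum_{j=1}^R m_j= \sum_{j=1}^L\ell_j\}}\prod_{j=1}^L Q^{\frac12 \ell_j(\ell_j-1)}\prod_{j=1}^{R}Q^{\frac12 m_j(m_j-1)}\Big(e^{\beta J(n)}A^{(n)}_RB^{(n)}_L + \big(e^{-\beta J(n)}-e^{\beta J(n)}\big)a^{(n)}_Rb^{(n)}_L\Big),$$ where, for the given $\ell_1,\dots,\ell_L,m_1,\dots,m_R$, $$A^{(n)}_R = \sum_{\substack{s_1,\dots,s_{R}\geq 1 \\ s_{i+1}-s_i \geq m_i+1}}\prod_{j=1}^RQ^{s_jm_j}(e^{-\beta})^{J(s_j+n-1)+J(s_j+m_j+n-1)},\qquad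 B^{(n)}_L = \sum_{\substack{r_1,\dots,r_L\leq 0 \\ r_{i+1}-r_i \leq -\ell_i -1}}\prod_{j=1}^{L}Q^{-r_j \ell_j}(e^{-\beta})^{J(r_j+n)+J(r_j-\ell_j+n)},$$ and $a^{(n)}_R$, $b^{(n)}_L$ are defined by the same sums with the extra factors $\mathbb{1}_{\{s_1>1\}}$, respectively $\mathbb{1}_{\{r_1<0\}}$, inserted into the summands.
   Context: Spin configurations are $\sigma\in\{-1,+1\}^{\mathbb{Z}}$; $\mathcal{B}$ is the set of configurations for which there exist $a,b\in\mathbb{Z}$ with $\sigma_{a-i}=-1$ and $\sigma_{b+i}=+1$ for all $i\in\mathbb{N}$. $H_J(\sigma)=\sum_{i\in\mathbb{Z}}J(i)\mathbb{1}_{\{\sigma_i\neq\sigma_{i+1}\}}$, $f_c(\sigma)=2\sum_{i=1}^\infty(i-c)\mathbb{1}_{\{\sigma_i=-1\}}-2\sum_{i=-\infty}^0(i-c)\mathbb{1}_{\{\sigma_i=1\}}$, $Z^J_{\beta,q,c}=\sum_\sigma e^{-\beta H_J(\sigma)}q^{f_c(\sigma)}$ and $\mu^c_J(\sigma)=e^{-\beta H_J(\sigma)}q^{f_c(\sigma)}/Z^J_{\beta,q,c}$ (concentrated on $\mathcal{B}$ under the summability condition). For $\sigma\in\mathcal{B}$, $N(\sigma)=\#\{i\geq1:\sigma_i=-1\}-\#\{i\leq 0:\sigma_i=+1\}$. $H^{(n)}_J(\sigma)=\sum_{i\in\mathbb{Z}}(J(i+n)-J(i))\mathbb{1}_{\{\sigma_i\neq\sigma_{i+1}\}}$,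 and $\mu^c_J(F)$ denotes the expectation of $F$ under $\mu^c_J$. In the sums, $L,R$ range over positive integers and the $\ell_j,m_j$ over positive integers; $s_i$, $r_i$ are integers subject to the displayed constraints (for $i=1,\dots,R-1$, resp. $i=1,\dots,L-1$). *)

theory Defs
  imports "HOL-Analysis.Analysis"
begin

type_synonym spin_config = "int \<Rightarrow> int"

definition configB :: "spin_config set" where
  "configB = {\<sigma>. (\<forall>i. \<sigma> i = -1 \<or> \<sigma> i = 1) \<and>
     (\<exists>a b. (\<forall>i::nat. \<sigma> (a - int i) = -1) \<and> (\<forall>i::nat. \<sigma> (b + int i) = 1))}"

definition H_J :: "(int \<Rightarrow> real) \<Rightarrow> spin_config \<Rightarrow> real" where
  "H_J J \<sigma> = (\<Sum>i\<in>{i. \<sigma> i \<noteq> \<sigma> (i+1)}. J i)"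

definition f_c :: "real \<Rightarrow> spin_config \<Rightarrow> real" where
  "f_c c \<sigma> = 2 * (\<Sum>i\<in>{i. i \<ge> 1 \<and> \<sigma> i = -1}. (real_of_int i - c))
             - 2 * (\<Sum>i\<in>{i. i \<le> 0 \<and> \<sigma> i = 1}. (real_of_int i - c))"

definition weight :: "(int \<Rightarrow> real) \<Rightarrow> real \<Rightarrow> real \<Rightarrow> real \<Rightarrow> spin_config \<Rightarrow> real" where
  "weight J \<beta> q c \<sigma> = exp (- \<beta> * H_J J \<sigma>) * q powr (f_c c \<sigma>)"

definition Zpart :: "(int \<Rightarrow> real) \<Rightarrow> real \<Rightarrow> real \<Rightarrow> real \<Rightarrow> real" where
  "Zpart J \<beta> q c = (\<Sum>\<^sub>\<infinity>\<sigma>\<in>configB. weight J \<beta> q c \<sigma>)"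

definition mu_exp :: "(int \<Rightarrow> real) \<Rightarrow> real \<Rightarrow> real \<Rightarrow> real \<Rightarrow> (spin_config \<Rightarrow> real) \<Rightarrow> real" where
  "mu_exp J \<beta> q c F = (\<Sum>\<^sub>\<infinity>\<sigma>\<in>configB. weight J \<beta> q c \<sigma> * F \<sigma>) / Zpart J \<beta> q c"

definition Nfun :: "spin_config \<Rightarrow> int" where
  "Nfun \<sigma> = int (card {i. i \<ge> 1 \<and> \<sigma> i = -1}) - int (card {i. i \<le> 0 \<and> \<sigma> i = 1})"

definition H_n :: "(int \<Rightarrow> real) \<Rightarrow> int \<Rightarrow> spin_config \<Rightarrow> real" where
  "H_n J n \<sigma> = (\<Sum>i\<in>{i. \<sigma> i \<noteq> \<sigma> (i+1)}. J (i+n) - J i)"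

text \<open>Admissible position lists s_1..s_R (0-based lists here).\<close>
definition adm_s :: "nat list \<Rightarrow> int list set" where
  "adm_s ms = {ss. length ss = length ms \<and> (\<forall>j<length ss. ss!j \<ge> 1) \<and>
      (\<forall>i. i + 1 < length ss \<longrightarrow> ss!(i+1) - ss!i \<ge> int (ms!i) + 1)}"

definition adm_r :: "nat list \<Rightarrow> int list set" where
  "adm_r ls = {rs. length rs = length ls \<and> (\<forall>j<length rs. rs!j \<le> 0) \<and>
      (\<forall>i. i + 1 < length rs \<longrightarrow> rs!(i+1) - rs!i \<le> - int (ls!i) - 1)}"

definition A_R :: "(int \<Rightarrow> real) \<Rightarrow> real \<Rightarrow> real \<Rightarrow> int \<Rightarrow> nat list \<Rightarrow> real" where
  "A_R J \<beta> Q n ms = (\<Sum>\<^sub>\<infinity>ss\<in>adm_s ms. \<Prod>j<length ms.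
      Q powr (real_of_int (ss!j) * real (ms!j)) *
      exp (- \<beta>) powr (J (ss!j + n - 1) + J (ss!j + int (ms!j) + n - 1)))"

definition a_R :: "(int \<Rightarrow> real) \<Rightarrow> real \<Rightarrow> real \<Rightarrow> int \<Rightarrow> nat list \<Rightarrow> real" where
  "a_R J \<beta> Q n ms = (\<Sum>\<^sub>\<infinity>ss\<in>adm_s ms. (if ss!0 > 1 then 1 else 0) * (\<Prod>j<length ms.
      Q powr (real_of_int (ss!j) * real (ms!j)) *
      exp (- \<beta>) powr (J (ss!j + n - 1) + J (ss!j + int (ms!j) + n - 1))))"

definition B_L :: "(int \<Rightarrow> real) \<Rightarrow> real \<Rightarrow> real \<Rightarrow> int \<Rightarrow> nat list \<Rightarrow> real" where
  "B_L J \<beta> Q n ls = (\<Sum>\<^sub>\<infinity>rs\<in>adm_r ls. \<Prod>j<length ls.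
      Q powr (- real_of_int (rs!j) * real (ls!j)) *
      exp (- \<beta>) powr (J (rs!j + n) + J (rs!j - int (ls!j) + n)))"

definition b_L :: "(int \<Rightarrow> real) \<Rightarrow> real \<Rightarrow> real \<Rightarrow> int \<Rightarrow> nat list \<Rightarrow> real" where
  "b_L J \<beta> Q n ls = (\<Sum>\<^sub>\<infinity>rs\<in>adm_r ls. (if rs!0 < 0 then 1 else 0) * (\<Prod>j<length ls.
      Q powr (- real_of_int (rs!j) * real (ls!j)) *
      exp (- \<beta>) powr (J (rs!j + n) + J (rs!j - int (ls!j) + n))))"

end

theory Submission
  imports Defs
begin

definition gs :: "int \<Rightarrow> int" where "gs i = (if i \<le> 0 then -1 else 1)"
definition cfg :: "int set \<Rightarrow> spin_config" where
  "cfg D = (\<lambda>i. if i \<in> D then - gs i else gs i)"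
definition dset :: "spin_config \<Rightarrow> int set" where "dset \<sigma> = {i. \<sigma> i \<noteq> gs i}"
definition ifs :: "spin_config \<Rightarrow> int set" where "ifs \<sigma> = {i. \<sigma> i \<noteq> \<sigma> (i+1)}"

lemma configB_finite_dset:
  assumes "\<sigma> \<in> configB" shows "finite (dset \<sigma>)"
proof -
  from assms obtain a b where A: "\<forall>i::nat. \<sigma> (a - int i) = -1" and B: "\<forall>i::nat. \<sigma> (b + int i) = 1"
    unfolding configB_def by blast
  have "dset \<sigma> \<subseteq> {min a 0 .. max b 1}"
  proof
    fix i assume i: "i \<in> dset \<sigma>"
    show "i \<in> {min a 0 .. max b 1}"
    proof (rule ccontr)
      assume "i \<notin> {min a 0 .. max b 1}"
      then consider "i < min a 0" | "i > max b 1" by force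
      then show False
      proof cases
        case 1 then have "\<sigma> i = -1" using A[rule_format, of "nat (a - i)"] by simp
        with 1 i show False by (simp add: dset_def gs_def)
      next
        case 2 then have "\<sigma> i = 1" using B[rule_format, of "nat (i - b)"] by simp
        with 2 i show False by (simp add: dset_def gs_def)
      qed
    qed
  qed
  then show ?thesis using finite_subset by blast
qed

lemma cfg_dset: assumes "\<sigma> \<in> configB" shows "cfg (dset \<sigma>) = \<sigma>"
proof
  fix i
  have "\<sigma> i = -1 \<or> \<sigma> i = 1" using assms unfolding configB_def by blast
  then show "cfg (dset \<sigma>) i = \<sigma> i" by (auto simp: cfg_def dset_def gs_def)
qed

lemma dset_cfg: "dset (cfg D) = D"
  by (auto simp: cfg_def dset_def gs_def)


lemma cfg_configB: assumes "finite D" shows "cfg D \<in> configB"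
proof -
  define a where "a = Min (insert 0 D)"
  define b where "b = Max (insert 0 D)"
  have a: "\<And>d. d \<in> D \<Longrightarrow> a \<le> d" "a \<le> 0" using assms by (auto simp: a_def)
  have b: "\<And>d. d \<in> D \<Longrightarrow> d \<le> b" "0 \<le> b" using assms by (auto simp: b_def)
  show ?thesis unfolding configB_def
  proof (intro CollectI conjI exI allI)
    fix i show "cfg D i = - 1 \<or> cfg D i = 1" by (auto simp: cfg_def gs_def)
  next
    fix i :: nat
    have "a - 1 - int i \<notin> D" using a(1) by force
    then show "cfg D (a - 1 - int i) = -1" using a(2) by (simp add: cfg_def gs_def)
  next
    fix i :: nat
    have "b + 1 + int i \<notin> D" using b(1) by force
    then show "cfg D (b + 1 + int i) = 1" using b(2) by (simp add: cfg_def gs_def)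
  qed
qed

lemma configB_image: "configB = cfg ` {D. finite D}"
proof
  show "configB \<subseteq> cfg ` {D. finite D}"
  proof
    fix s assume "s \<in> configB"
    then show "s \<in> cfg ` {D. finite D}"
      using configB_finite_dset cfg_dset by (metis (mono_tags, lifting) imageI mem_Collect_eq)
  qed
qed (use cfg_configB in auto)

lemma inj_cfg: "inj cfg"
  by (metis dset_cfg injI)

lemma ifs_cfg_sub: "ifs (cfg D) \<subseteq> {0} \<union> D \<union> (\<lambda>d. d - 1) ` D"
proof
  fix i assume "i \<in> ifs (cfg D)"
  then have "cfg D i \<noteq> cfg D (i+1)" by (simp add: ifs_def)
  then show "i \<in> {0} \<union> D \<union> (\<lambda>d. d - 1) ` D"
    apply (cases "i = 0")
     apply (auto simp: cfg_def gs_def image_iff split: if_splits)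
     apply (rule bexI[of _ "i+1"]; simp)+
    done
qed

lemma finite_ifs_cfg: "finite D \<Longrightarrow> finite (ifs (cfg D))"
  by (rule finite_subset[OF ifs_cfg_sub]) auto

lemma fc_cfg:
  assumes "finite D"
  shows "f_c c (cfg D) = 2 * (\<Sum>i\<in>{d\<in>D. d \<ge> 1}. (real_of_int i - c)) - 2 * (\<Sum>i\<in>{d\<in>D. d \<le> 0}. (real_of_int i - c))"
proof -
  have 1: "{i. i \<ge> 1 \<and> cfg D i = -1} = {d\<in>D. d \<ge> 1}" by (auto simp: cfg_def gs_def)
  have 2: "{i. i \<le> 0 \<and> cfg D i = 1} = {d\<in>D. d \<le> 0}" by (auto simp: cfg_def gs_def)
  show ?thesis unfolding f_c_def 1 2 ..
qed

lemma Nfun_cfg: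
  "Nfun (cfg D) = int (card {d\<in>D. d \<ge> 1}) - int (card {d\<in>D. d \<le> 0})"
proof -
  have 1: "{i. i \<ge> 1 \<and> cfg D i = -1} = {d\<in>D. d \<ge> 1}" by (auto simp: cfg_def gs_def)
  have 2: "{i. i \<le> 0 \<and> cfg D i = 1} = {d\<in>D. d \<le> 0}" by (auto simp: cfg_def gs_def)
  show ?thesis unfolding Nfun_def 1 2 ..
qed

definition wt :: "real \<Rightarrow> real \<Rightarrow> int \<Rightarrow> real" where
  "wt q c d = (if d \<ge> 1 then q powr (2 * (real_of_int d - c)) else q powr (- 2 * (real_of_int d - c)))"

lemma qpowr_fc:
  assumes "finite D" "q > 0"
  shows "q powr f_c c (cfg D) = (\<Prod>d\<in>D. wt q c d)"
proof -
  let ?P = "{d\<in>D. d \<ge> 1}" and ?M = "{d\<in>D. d \<le> 0}"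
  have fin: "finite ?P" "finite ?M" using assms by auto
  have D: "D = ?P \<union> ?M" "?P \<inter> ?M = {}" by auto
  have "f_c c (cfg D) = (\<Sum>i\<in>?P. 2 * (real_of_int i - c)) + (\<Sum>i\<in>?M. - 2 * (real_of_int i - c))"
    unfolding fc_cfg[OF assms(1)] by (simp only: mult_minus_left sum_negf flip: sum_distrib_left)
  then have "q powr f_c c (cfg D) = (\<Prod>i\<in>?P. q powr (2 * (real_of_int i - c))) * (\<Prod>i\<in>?M. q powr (- 2 * (real_of_int i - c)))"
    using assms by (simp add: powr_add powr_sum)
  also have "\<dots> = (\<Prod>i\<in>?P. wt q c i) * (\<Prod>i\<in>?M. wt q c i)"
    by (intro arg_cong2[where f="(*)"] prod.cong) (auto simp: wt_def)
  also have "\<dots> = (\<Prod>d\<in>D. wt q c d)"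
    by (subst (3) D(1), rule prod.union_disjoint[symmetric]) (use fin in auto)
  finally show ?thesis .
qed

lemma wt_pos: "q > 0 \<Longrightarrow> wt q c d > 0" by (simp add: wt_def)

definition Jm :: "(int \<Rightarrow> real) \<Rightarrow> int \<Rightarrow> real" where "Jm J k = max 0 (- J k)"

lemma Jm_nonneg: "Jm J k \<ge> 0" by (simp add: Jm_def)

lemma sum_Un_le:
  fixes f :: "'a \<Rightarrow> real"
  assumes "finite A" "finite B" "\<And>x. f x \<ge> 0"
  shows "sum f (A \<union> B) \<le> sum f A + sum f B"
  using sum_Un[OF assms(1,2), of f] sum_nonneg[of "A \<inter> B" f] assms(3) by simp

lemma ifs_sum_bound:
  assumes "finite D"
  shows "(\<Sum>i\<in>ifs (cfg D). Jm J (i+n)) \<le> Jm J n + (\<Sum>d\<in>D. Jm J (d - 1 + n) + Jm J (d + n))"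
proof -
  let ?f = "\<lambda>i. Jm J (i+n)"
  have fin: "finite ({0} \<union> D \<union> (\<lambda>d. d - 1) ` D)" using assms by auto
  have "(\<Sum>i\<in>ifs (cfg D). ?f i) \<le> (\<Sum>i\<in>{0} \<union> D \<union> (\<lambda>d. d - 1) ` D. ?f i)"
    by (rule sum_mono2[OF fin ifs_cfg_sub]) (simp add: Jm_nonneg)
  also have "\<dots> \<le> (\<Sum>i\<in>{0} \<union> D. ?f i) + (\<Sum>i\<in>(\<lambda>d. d - 1) ` D. ?f i)"
    by (rule sum_Un_le) (use assms in \<open>auto simp add: Jm_nonneg\<close>)
  also have "(\<Sum>i\<in>{0} \<union> D. ?f i) \<le> (\<Sum>i\<in>{0}. ?f i) + (\<Sum>i\<in>D. ?f i)"
    by (rule sum_Un_le) (use assms in \<open>auto simp add: Jm_nonneg\<close>)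
  also have "(\<Sum>i\<in>(\<lambda>d. d - 1) ` D. ?f i) \<le> (\<Sum>d\<in>D. ?f (d - 1))"
    using sum_image_le[OF assms, of ?f "\<lambda>d. d - 1"] by (simp add: Jm_nonneg o_def)
  finally show ?thesis by (simp add: sum.distrib)
qed

lemma exp_ifs_bound:
  assumes "finite D" "\<beta> \<ge> 0"
  shows "exp (- \<beta> * (\<Sum>i\<in>ifs (cfg D). J (i+n))) \<le> exp (\<beta> * Jm J n) * (\<Prod>d\<in>D. exp (\<beta> * (Jm J (d - 1 + n) + Jm J (d + n))))"
proof -
  have "- (\<Sum>i\<in>ifs (cfg D). J (i+n)) \<le> (\<Sum>i\<in>ifs (cfg D). Jm J (i+n))"
    by (simp add: sum_negf[symmetric] Jm_def sum_mono)
  also have "\<dots> \<le> Jm J n + (\<Sum>d\<in>D. Jm J (d - 1 + n) + Jm J (d + n))" by (rule ifs_sum_bound[OF assms(1)])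
  finally have "- \<beta> * (\<Sum>i\<in>ifs (cfg D). J (i+n)) \<le> \<beta> * (Jm J n + (\<Sum>d\<in>D. Jm J (d - 1 + n) + Jm J (d + n)))"
    using assms(2) by (metis minus_mult_commute mult_left_mono)
  then show ?thesis
    by (simp add: exp_sum[OF assms(1), symmetric] sum_distrib_left distrib_left exp_add[symmetric]
        sum_negf[symmetric])
qed

lemma summable_prod_finite_sets:
  fixes a :: "'a \<Rightarrow> real"
  assumes nn: "\<And>x. a x \<ge> 0" and sa: "a summable_on UNIV"
  shows "(\<lambda>D. \<Prod>d\<in>D. a d) summable_on {D. finite D}"
proof (rule nonneg_bdd_above_summable_on)
  show "\<And>D. D \<in> {D. finite D} \<Longrightarrow> 0 \<le> (\<Prod>d\<in>D. a d)" using nn by (simp add: prod_nonneg)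
  show "bdd_above (sum (\<lambda>D. \<Prod>d\<in>D. a d) ` {F. F \<subseteq> {D. finite D} \<and> finite F})"
  proof (rule bdd_aboveI2)
    fix F :: "'a set set" assume F: "F \<in> {F. F \<subseteq> {D. finite D} \<and> finite F}"
    define U where "U = \<Union>F"
    have finU: "finite U" using F by (auto simp: U_def)
    have "(\<Sum>D\<in>F. \<Prod>d\<in>D. a d) \<le> (\<Sum>D\<in>Pow U. \<Prod>d\<in>D. a d)"
      by (rule sum_mono2) (use finU F nn in \<open>auto simp: U_def prod_nonneg\<close>)
    also have "\<dots> = (\<Sum>D\<in>Pow U. (\<Prod>d\<in>D. a d) * (\<Prod>d\<in>U-D. 1))" by simp
    also have "\<dots> = (\<Prod>d\<in>U. a d + 1)" by (rule prod_add[symmetric, OF finU])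
    also have "\<dots> \<le> (\<Prod>d\<in>U. exp (a d))"
      by (rule prod_mono) (use nn in \<open>auto simp: add.commute\<close>)
    also have "\<dots> = exp (\<Sum>d\<in>U. a d)" by (simp add: exp_sum[OF finU])
    also have "\<dots> \<le> exp (infsum a UNIV)"
      by (subst exp_le_cancel_iff, rule finite_sum_le_infsum) (use sa finU nn in auto)
    finally show "(\<Sum>D\<in>F. \<Prod>d\<in>D. a d) \<le> exp (infsum a UNIV)" .
  qed
qed

lemma summable_except_finite:
  fixes f g :: "'a \<Rightarrow> real"
  assumes "\<And>x. x \<in> A \<Longrightarrow> f x \<ge> 0" "g summable_on A" "finite F"
    "\<And>x. x \<in> A - F \<Longrightarrow> f x \<le> g x"
  shows "f summable_on A"
proof -
  have "f summable_on (A - F)"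
    by (rule summable_on_comparison_test[OF summable_on_subset_banach[OF assms(2)]]) (use assms in auto)
  moreover have "f summable_on (A \<inter> F)" using assms(3) by simp
  ultimately have "f summable_on ((A - F) \<union> (A \<inter> F))" by (rule summable_on_union)
  moreover have "(A - F) \<union> (A \<inter> F) = A" by blast
  ultimately show ?thesis by simp
qed

lemma finite_large_values:
  fixes f :: "'a \<Rightarrow> real"
  assumes "f summable_on A" "\<And>x. x \<in> A \<Longrightarrow> f x \<ge> 0" "e > 0"
  shows "finite {x\<in>A. f x > e}"
proof (rule ccontr)
  assume inf: "infinite {x\<in>A. f x > e}"
  obtain N :: nat where N: "real N * e > infsum f A"
    using reals_Archimedean3[OF assms(3)] by blast
  obtain B where B: "finite B" "card B = N" "B \<subseteq> {x\<in>A. f x > e}"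
    using infinite_arbitrarily_large[OF inf] by blast
  have "real N * e = (\<Sum>x\<in>B. e)" using B by simp
  also have "\<dots> \<le> sum f B" by (rule sum_mono) (use B in auto)
  also have "\<dots> \<le> infsum f A" by (rule finite_sum_le_infsum) (use B assms in auto)
  finally show False using N by simp
qed

lemma geom_int_summable:
  fixes r :: real assumes "0 \<le> r" "r < 1"
  shows "(\<lambda>k::int. r ^ nat \<bar>k\<bar>) summable_on UNIV"
proof -
  have s: "(\<lambda>n::nat. r ^ n) summable_on UNIV"
    using assms by (subst summable_on_UNIV_nonneg_real_iff) (auto intro: summable_geometric)
  have 1: "(\<lambda>k::int. r ^ nat \<bar>k\<bar>) summable_on (int ` UNIV)"
    by (subst summable_on_reindex) (auto simp: o_def s)
  have 2: "(\<lambda>k::int. r ^ nat \<bar>k\<bar>) summable_on ((\<lambda>n. - int n) ` UNIV)"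
    by (subst summable_on_reindex) (auto simp: o_def s inj_on_def)
  have "(\<lambda>k::int. r ^ nat \<bar>k\<bar>) summable_on (int ` UNIV \<union> (\<lambda>n. - int n) ` UNIV)"
    by (rule summable_on_union[OF 1 2])
  moreover have "int ` UNIV \<union> (\<lambda>n. - int n) ` UNIV = UNIV"
  proof (intro set_eqI iffI)
    fix k :: int assume "k \<in> UNIV"
    show "k \<in> int ` UNIV \<union> (\<lambda>n. - int n) ` UNIV"
    proof (cases "k \<ge> 0")
      case True then have "k = int (nat k)" by simp
      then show ?thesis by blast
    next
      case False then have "k = - int (nat (-k))" by simp
      then show ?thesis by blast
    qed
  qed auto
  ultimately show ?thesis by simp
qed

lemma powr_2int:
  assumes "q > 0" "k \<ge> 0" shows "q powr (2 * real_of_int k) = (q^2) ^ nat k"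
proof -
  have "2 * real_of_int k = real (2 * nat k)" using assms(2) by simp
  have "q powr (2 * real_of_int k) = q ^ (2 * nat k)" unfolding \<open>2 * real_of_int k = real (2 * nat k)\<close>
    using assms(1) by (rule powr_realpow)
  then show ?thesis by (simp add: power_mult)
qed

lemma wt_summable:
  assumes "0 < q" "q < 1"
  shows "(\<lambda>k. wt q c k) summable_on UNIV"
proof (rule summable_except_finite[where F="{}"])
  show "(\<lambda>k::int. (q powr (-2*c) + q powr (2*c)) * (q^2) ^ nat \<bar>k\<bar>) summable_on UNIV"
    by (rule summable_on_cmult_right, rule geom_int_summable) (use assms in \<open>simp_all add: power_less_one_iff\<close>)
  fix k :: int
  show "0 \<le> wt q c k" using wt_pos[OF assms(1)] less_imp_le by blast
  have "wt q c k = (if k \<ge> 1 then q powr (-2*c) else q powr (2*c)) * (q^2) ^ nat \<bar>k\<bar>"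
  proof (cases "k \<ge> 1")
    case True
    have "wt q c k = q powr (-2*c + 2 * real_of_int k)" using True by (simp add: wt_def algebra_simps)
    also have "\<dots> = q powr (-2*c) * (q^2) ^ nat \<bar>k\<bar>"
      using True assms by (simp only: powr_add powr_2int[OF assms(1)]) simp
    finally show ?thesis using True by simp
  next
    case False
    have "wt q c k = q powr (2*c + 2 * real_of_int (-k))" using False by (simp add: wt_def algebra_simps)
    also have "\<dots> = q powr (2*c) * (q^2) ^ nat \<bar>k\<bar>"
      using False assms powr_2int[OF assms(1), of "-k"] by (simp only: powr_add) simp
    finally show ?thesis using False by simp
  qed
  also have "\<dots> \<le> (q powr (-2*c) + q powr (2*c)) * (q^2) ^ nat \<bar>k\<bar>"
    by (intro mult_right_mono) auto
  finally show "wt q c k \<le> (q powr (-2*c) + q powr (2*c)) * (q^2) ^ nat \<bar>k\<bar>" .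
qed simp

definition xx :: "real \<Rightarrow> real \<Rightarrow> real \<Rightarrow> (int \<Rightarrow> real) \<Rightarrow> int \<Rightarrow> real" where
  "xx q c \<beta> J i = (if i \<le> 0 then q powr (2 * (real_of_int i - c)) * exp (\<beta> * J (i - 1))
            / (exp (\<beta> * \<bar>J i\<bar>) + q^2 * exp (\<beta> * \<bar>J (i - 2)\<bar>))
     else q powr (- 2 * (real_of_int i - c)) * exp (\<beta> * J (i - 1))
            / (exp (\<beta> * \<bar>J i\<bar>) + q powr (-2) * exp (\<beta> * \<bar>J (i - 2)\<bar>)))"

lemma xx_pos: "q > 0 \<Longrightarrow> xx q c \<beta> J i > 0"
  by (simp add: xx_def add_pos_pos)

lemma u_bound_right:
  assumes "q > 0" "\<beta> \<ge> 0" "k \<ge> 1"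
  shows "exp (\<beta> * (Jm J (k-1) + Jm J k)) * wt q c k \<le> 1 / xx q c \<beta> J k + 1 / xx q c \<beta> J (k+1) + wt q c k"
proof -
  define w where "w = q powr (2 * (real_of_int k - c))"
  have w: "wt q c k = w" using assms by (simp add: wt_def w_def)
  have wpos: "w > 0" using assms by (simp add: w_def)
  define Dk where "Dk = exp (\<beta> * \<bar>J k\<bar>) + q powr (-2) * exp (\<beta> * \<bar>J (k - 2)\<bar>)"
  define Dk1 where "Dk1 = exp (\<beta> * \<bar>J (k+1)\<bar>) + q powr (-2) * exp (\<beta> * \<bar>J (k - 1)\<bar>)"
  have pw: "q powr (- 2 * (real_of_int k - c)) = 1 / w"
    unfolding w_def by (simp only: powr_minus_divide[symmetric]) (rule arg_cong[where f="\<lambda>x. q powr x"], simp)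
  have Dkpos: "Dk > 0" unfolding Dk_def by (intro add_pos_nonneg) auto
  have "xx q c \<beta> J k = q powr (- 2 * (real_of_int k - c)) * exp (\<beta> * J (k - 1)) / Dk"
    using assms by (simp add: xx_def Dk_def)
  then have eqx: "xx q c \<beta> J k = (1 / w) * exp (\<beta> * J (k - 1)) / Dk" by (simp only: pw)
  have x1: "1 / xx q c \<beta> J k = Dk * w / exp (\<beta> * J (k - 1))"
    unfolding eqx using wpos Dkpos by (simp add: field_simps)
  have x2: "1 / xx q c \<beta> J (k+1) = Dk1 * (q^2 * w) / exp (\<beta> * J k)"
  proof -
    have "q powr (2 * (real_of_int (k+1) - c)) = q powr (2 + 2 * (real_of_int k - c))"
      by (rule arg_cong[where f="\<lambda>x. q powr x"]) (simp add: algebra_simps)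
    also have "\<dots> = q^2 * w" using assms by (simp only: powr_add w_def) simp
    finally have "q powr (2 * (real_of_int (k+1) - c)) = q^2 * w" .
    then have pw1: "q powr (- 2 * (real_of_int (k+1) - c)) = 1 / (q^2 * w)"
      by (metis powr_minus_divide minus_mult_left)
    have Dk1pos: "Dk1 > 0" unfolding Dk1_def by (intro add_pos_nonneg) auto
    have "xx q c \<beta> J (k+1) = q powr (- 2 * (real_of_int (k+1) - c)) * exp (\<beta> * J (k + 1 - 1)) / Dk1"
      using assms by (simp add: xx_def Dk1_def)
    then have eqx1: "xx q c \<beta> J (k+1) = (1 / (q^2 * w)) * exp (\<beta> * J k) / Dk1" by (simp only: pw1) simp
    show ?thesis
      unfolding eqx1 using wpos Dk1pos assms(1) by (simp add: field_simps)
  qed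
  have Dk_ge: "Dk \<ge> exp (\<beta> * \<bar>J k\<bar>)" using assms by (simp add: Dk_def)
  have Dk1_ge: "Dk1 \<ge> q powr (-2)" 
  proof -
    have "q powr (-2) * 1 \<le> q powr (-2) * exp (\<beta> * \<bar>J (k - 1)\<bar>)"
      using assms by (intro mult_left_mono) auto
    then show ?thesis unfolding Dk1_def by (smt (verit) exp_gt_zero)
  qed
  have nn1: "1 / xx q c \<beta> J k \<ge> 0" "1 / xx q c \<beta> J (k+1) \<ge> 0"
    using xx_pos[OF assms(1)] by (auto simp: less_imp_le)
  consider (i) "J (k-1) \<le> 0" | (ii) "J (k-1) > 0" "J k \<ge> 0" | (iii) "J (k-1) > 0" "J k < 0" by linarith
  then show ?thesis
  proof cases
    case i
    have "exp (\<beta> * (Jm J (k-1) + Jm J k)) * wt q c k = exp (\<beta> * Jm J k) * w / exp (\<beta> * J (k - 1))"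
    proof -
      have "Jm J (k-1) = - J (k-1)" using i by (simp add: Jm_def)
      then have "\<beta> * (Jm J (k-1) + Jm J k) = \<beta> * Jm J k - \<beta> * J (k - 1)" by (simp add: algebra_simps)
      then show ?thesis by (simp add: exp_diff w)
    qed
    also have "\<dots> \<le> Dk * w / exp (\<beta> * J (k - 1))"
    proof -
      have "exp (\<beta> * Jm J k) \<le> exp (\<beta> * \<bar>J k\<bar>)" using assms(2) by (auto simp: Jm_def intro!: mult_left_mono)
      then have "exp (\<beta> * Jm J k) \<le> Dk" using Dk_ge by linarith
      then show ?thesis using wpos by (intro divide_right_mono mult_right_mono) auto
    qed
    finally have "exp (\<beta> * (Jm J (k-1) + Jm J k)) * wt q c k \<le> 1 / xx q c \<beta> J k" using x1 by simp
    then show ?thesis using nn1 wpos w by linarith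
  next
    case ii
    then have "exp (\<beta> * (Jm J (k-1) + Jm J k)) * wt q c k = wt q c k" by (simp add: Jm_def)
    then show ?thesis using nn1 by linarith
  next
    case iii
    have "exp (\<beta> * (Jm J (k-1) + Jm J k)) * wt q c k = w / exp (\<beta> * J k)"
      using iii by (simp add: Jm_def w exp_minus divide_simps)
    also have "\<dots> = q powr (-2) * (q^2 * w) / exp (\<beta> * J k)"
    proof -
      have "q powr (-2) * q^2 = 1" using assms by (simp add: powr_minus)
      then show ?thesis by (metis mult.assoc mult_1)
    qed
    also have "\<dots> \<le> Dk1 * (q^2 * w) / exp (\<beta> * J k)"
      using Dk1_ge wpos by (intro divide_right_mono mult_right_mono) auto
    finally have "exp (\<beta> * (Jm J (k-1) + Jm J k)) * wt q c k \<le> 1 / xx q c \<beta> J (k+1)" using x2 by simp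
    then show ?thesis using nn1 wpos w by linarith
  qed
qed


lemma u_bound_left:
  assumes "q > 0" "\<beta> \<ge> 0" "k \<le> -1"
  shows "exp (\<beta> * (Jm J (k-1) + Jm J k)) * wt q c k \<le> 1 / xx q c \<beta> J k + 1 / xx q c \<beta> J (k+1) + wt q c k"
proof -
  define w where "w = q powr (- 2 * (real_of_int k - c))"
  have w: "wt q c k = w" using assms by (simp add: wt_def w_def)
  have wpos: "w > 0" using assms by (simp add: w_def)
  define Dk where "Dk = exp (\<beta> * \<bar>J k\<bar>) + q^2 * exp (\<beta> * \<bar>J (k - 2)\<bar>)"
  define Dk1 where "Dk1 = exp (\<beta> * \<bar>J (k+1)\<bar>) + q^2 * exp (\<beta> * \<bar>J (k - 1)\<bar>)"
  have pw: "q powr (2 * (real_of_int k - c)) = 1 / w"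
    unfolding w_def by (simp only: powr_minus_divide[symmetric]) (rule arg_cong[where f="\<lambda>x. q powr x"], simp)
  have Dkpos: "Dk > 0" unfolding Dk_def by (intro add_pos_nonneg) auto
  have "xx q c \<beta> J k = q powr (2 * (real_of_int k - c)) * exp (\<beta> * J (k - 1)) / Dk"
    using assms by (simp add: xx_def Dk_def)
  then have eqx: "xx q c \<beta> J k = (1 / w) * exp (\<beta> * J (k - 1)) / Dk" by (simp only: pw)
  have x1: "1 / xx q c \<beta> J k = Dk * w / exp (\<beta> * J (k - 1))"
    unfolding eqx using wpos Dkpos by (simp add: field_simps)
  have x2: "1 / xx q c \<beta> J (k+1) = Dk1 * w / (q^2 * exp (\<beta> * J k))"
  proof -
    have "q powr (2 * (real_of_int (k+1) - c)) = q powr (2 + 2 * (real_of_int k - c))"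
      by (rule arg_cong[where f="\<lambda>x. q powr x"]) (simp add: algebra_simps)
    also have "\<dots> = q^2 * (1 / w)" using assms by (simp only: powr_add pw) simp
    finally have pw1: "q powr (2 * (real_of_int (k+1) - c)) = q^2 * (1 / w)" .
    have Dk1pos: "Dk1 > 0" unfolding Dk1_def by (intro add_pos_nonneg) auto
    have "xx q c \<beta> J (k+1) = q powr (2 * (real_of_int (k+1) - c)) * exp (\<beta> * J (k + 1 - 1)) / Dk1"
      using assms by (simp add: xx_def Dk1_def)
    then have eqx1: "xx q c \<beta> J (k+1) = (q^2 * (1 / w)) * exp (\<beta> * J k) / Dk1" by (simp only: pw1) simp
    show ?thesis
      unfolding eqx1 using wpos Dk1pos assms(1) by (simp add: field_simps)
  qed
  have Dk_ge: "Dk \<ge> exp (\<beta> * \<bar>J k\<bar>)" using assms by (simp add: Dk_def)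
  have Dk1_ge: "Dk1 \<ge> q^2" 
  proof -
    have "q^2 * 1 \<le> q^2 * exp (\<beta> * \<bar>J (k - 1)\<bar>)"
      using assms by (intro mult_left_mono) auto
    then show ?thesis unfolding Dk1_def by (smt (verit) exp_gt_zero)
  qed
  have nn1: "1 / xx q c \<beta> J k \<ge> 0" "1 / xx q c \<beta> J (k+1) \<ge> 0"
    using xx_pos[OF assms(1)] by (auto simp: less_imp_le)
  consider (i) "J (k-1) \<le> 0" | (ii) "J (k-1) > 0" "J k \<ge> 0" | (iii) "J (k-1) > 0" "J k < 0" by linarith
  then show ?thesis
  proof cases
    case i
    have "exp (\<beta> * (Jm J (k-1) + Jm J k)) * wt q c k = exp (\<beta> * Jm J k) * w / exp (\<beta> * J (k - 1))"
    proof -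
      have "Jm J (k-1) = - J (k-1)" using i by (simp add: Jm_def)
      then have "\<beta> * (Jm J (k-1) + Jm J k) = \<beta> * Jm J k - \<beta> * J (k - 1)" by (simp add: algebra_simps)
      then show ?thesis by (simp add: exp_diff w)
    qed
    also have "\<dots> \<le> Dk * w / exp (\<beta> * J (k - 1))"
    proof -
      have "exp (\<beta> * Jm J k) \<le> exp (\<beta> * \<bar>J k\<bar>)" using assms(2) by (auto simp: Jm_def intro!: mult_left_mono)
      then have "exp (\<beta> * Jm J k) \<le> Dk" using Dk_ge by linarith
      then show ?thesis using wpos by (intro divide_right_mono mult_right_mono) auto
    qed
    finally have "exp (\<beta> * (Jm J (k-1) + Jm J k)) * wt q c k \<le> 1 / xx q c \<beta> J k" using x1 by simp
    then show ?thesis using nn1 wpos w by linarith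
  next
    case ii
    then have "exp (\<beta> * (Jm J (k-1) + Jm J k)) * wt q c k = wt q c k" by (simp add: Jm_def)
    then show ?thesis using nn1 by linarith
  next
    case iii
    have "exp (\<beta> * (Jm J (k-1) + Jm J k)) * wt q c k = q^2 * w / (q^2 * exp (\<beta> * J k))"
      using iii assms(1) by (simp add: Jm_def w exp_minus divide_simps)
    also have "\<dots> \<le> Dk1 * w / (q^2 * exp (\<beta> * J k))"
      using Dk1_ge wpos assms(1) by (intro divide_right_mono mult_right_mono) auto
    finally have "exp (\<beta> * (Jm J (k-1) + Jm J k)) * wt q c k \<le> 1 / xx q c \<beta> J (k+1)" using x2 by simp
    then show ?thesis using nn1 wpos w by linarith
  qed
qed


lemma inv_bound_half:
  fixes x :: real assumes "x > 0" "1 / (1 + x) \<le> 1/2"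
  shows "1 / x \<le> 2 * (1 / (1 + x))"
proof -
  have "x \<ge> 1" using assms by (simp add: field_simps)
  then show ?thesis using assms(1) by (simp add: field_simps)
qed

lemma u_summable:
  fixes c \<beta> q :: real and J :: "int \<Rightarrow> real"
  assumes "\<beta> \<ge> 0" and "0 < q" and "q < 1"
    and h1: "(\<lambda>i::int. 1 / (1 + q powr (2 * (real_of_int i - c)) * exp (\<beta> * J (i - 1))
            / (exp (\<beta> * \<bar>J i\<bar>) + q^2 * exp (\<beta> * \<bar>J (i - 2)\<bar>)))) summable_on {..0}"
    and h2: "(\<lambda>i::int. 1 / (1 + q powr (- 2 * (real_of_int i - c)) * exp (\<beta> * J (i - 1))
            / (exp (\<beta> * \<bar>J i\<bar>) + q powr (-2) * exp (\<beta> * \<bar>J (i - 2)\<bar>)))) summable_on {1..}"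
  shows "(\<lambda>k. exp (\<beta> * (Jm J (k-1) + Jm J k)) * wt q c k) summable_on UNIV"
proof -
  define tt where "tt k = 1 / (1 + xx q c \<beta> J k)" for k
  have tt_nn: "tt k \<ge> 0" for k using xx_pos[OF assms(2)] by (simp add: tt_def add_pos_pos less_imp_le)
  have t1: "tt summable_on {..0}"
    using h1 by (subst summable_on_cong[where g="\<lambda>i. 1 / (1 + q powr (2 * (real_of_int i - c)) * exp (\<beta> * J (i - 1))
            / (exp (\<beta> * \<bar>J i\<bar>) + q^2 * exp (\<beta> * \<bar>J (i - 2)\<bar>)))"]) (auto simp: tt_def xx_def)
  have t2: "tt summable_on {1..}"
    using h2 by (subst summable_on_cong[where g="\<lambda>i. 1 / (1 + q powr (- 2 * (real_of_int i - c)) * exp (\<beta> * J (i - 1))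
            / (exp (\<beta> * \<bar>J i\<bar>) + q powr (-2) * exp (\<beta> * \<bar>J (i - 2)\<bar>)))"]) (auto simp: tt_def xx_def)
  have "tt summable_on ({..0} \<union> {1..})" by (rule summable_on_union[OF t1 t2])
  moreover have "{..0} \<union> {1..} = (UNIV :: int set)" by auto
  ultimately have tsum: "tt summable_on UNIV" by simp
  have bij: "bij_betw (\<lambda>k::int. k + 1) UNIV UNIV"
    by (rule bij_betwI[where g="\<lambda>k. k - 1"]) auto
  have tsum1: "(\<lambda>k. tt (k + 1)) summable_on UNIV"
    using summable_on_reindex_bij_betw[OF bij, of tt] tsum by simp
  define Bad where "Bad = {k\<in>UNIV. tt k > 1/2}"
  have finBad: "finite Bad" unfolding Bad_def
    by (rule finite_large_values[OF tsum]) (auto simp: tt_nn)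
  define F where "F = {0} \<union> Bad \<union> (\<lambda>k. k - 1) ` Bad"
  have finF: "finite F" using finBad by (simp add: F_def)
  show ?thesis
  proof (rule summable_except_finite[OF _ _ finF])
    show "(\<lambda>k. 2 * tt k + 2 * tt (k+1) + wt q c k) summable_on UNIV"
      by (intro summable_on_add summable_on_cmult_right tsum tsum1 wt_summable assms)
  next
    fix k :: int
    show "0 \<le> exp (\<beta> * (Jm J (k-1) + Jm J k)) * wt q c k"
      using wt_pos[OF assms(2)] by (simp add: less_imp_le)
  next
    fix k :: int assume k: "k \<in> UNIV - F"
    then have k0: "k \<noteq> 0" and kb: "tt k \<le> 1/2" and kb1: "tt (k+1) \<le> 1/2"
      by (auto simp: F_def Bad_def image_iff not_less)
    have i1: "1 / xx q c \<beta> J k \<le> 2 * tt k"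
      unfolding tt_def by (rule inv_bound_half[OF xx_pos[OF assms(2)]]) (use kb in \<open>simp add: tt_def\<close>)
    have i2: "1 / xx q c \<beta> J (k+1) \<le> 2 * tt (k+1)"
      unfolding tt_def by (rule inv_bound_half[OF xx_pos[OF assms(2)]]) (use kb1 in \<open>simp add: tt_def\<close>)
    have "exp (\<beta> * (Jm J (k-1) + Jm J k)) * wt q c k \<le> 1 / xx q c \<beta> J k + 1 / xx q c \<beta> J (k+1) + wt q c k"
    proof (cases "k \<ge> 1")
      case True then show ?thesis by (rule u_bound_right[OF assms(2,1)])
    next
      case False then have "k \<le> -1" using k0 by linarith
      then show ?thesis by (rule u_bound_left[OF assms(2,1)])
    qed
    then show "exp (\<beta> * (Jm J (k-1) + Jm J k)) * wt q c k \<le> 2 * tt k + 2 * tt (k+1) + wt q c k"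
      using i1 i2 by linarith
  qed
qed

lemma wt_shift:
  assumes "q > 0" "(d \<ge> 1) = (d + n \<ge> 1)"
  shows "wt q c d \<le> (q powr (- 2 * real_of_int n) + q powr (2 * real_of_int n)) * wt q c (d + n)"
proof (cases "d \<ge> 1")
  case True
  have "wt q c d = q powr (- 2 * real_of_int n + 2 * (real_of_int (d + n) - c))"
    using True by (simp add: wt_def algebra_simps)
  also have "\<dots> = q powr (- 2 * real_of_int n) * wt q c (d + n)"
    using True assms by (simp only: powr_add) (simp add: wt_def)
  also have "\<dots> \<le> (q powr (- 2 * real_of_int n) + q powr (2 * real_of_int n)) * wt q c (d + n)"
    using wt_pos[OF assms(1), of c "d+n"] by (intro mult_right_mono) auto
  finally show ?thesis .
next
  case False
  have "wt q c d = q powr (2 * real_of_int n + - 2 * (real_of_int (d + n) - c))"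
    using False by (simp add: wt_def algebra_simps)
  also have "\<dots> = q powr (2 * real_of_int n) * wt q c (d + n)"
    using False assms by (simp only: powr_add) (simp add: wt_def)
  also have "\<dots> \<le> (q powr (- 2 * real_of_int n) + q powr (2 * real_of_int n)) * wt q c (d + n)"
    using wt_pos[OF assms(1), of c "d+n"] by (intro mult_right_mono) auto
  finally show ?thesis .
qed

lemma a_summable:
  fixes c \<beta> q :: real and J :: "int \<Rightarrow> real"
  assumes "\<beta> \<ge> 0" and "0 < q" and "q < 1"
    and h1: "(\<lambda>i::int. 1 / (1 + q powr (2 * (real_of_int i - c)) * exp (\<beta> * J (i - 1))
            / (exp (\<beta> * \<bar>J i\<bar>) + q^2 * exp (\<beta> * \<bar>J (i - 2)\<bar>)))) summable_on {..0}"
    and h2: "(\<lambda>i::int. 1 / (1 + q powr (- 2 * (real_of_int i - c)) * exp (\<beta> * J (i - 1))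
            / (exp (\<beta> * \<bar>J i\<bar>) + q powr (-2) * exp (\<beta> * \<bar>J (i - 2)\<bar>)))) summable_on {1..}"
  shows "(\<lambda>d. exp (\<beta> * (Jm J (d - 1 + n) + Jm J (d + n))) * wt q c d) summable_on UNIV"
proof -
  define u where "u k = exp (\<beta> * (Jm J (k-1) + Jm J k)) * wt q c k" for k
  have us: "u summable_on UNIV" unfolding u_def by (rule u_summable[OF assms])
  have bij: "bij_betw (\<lambda>k::int. k + n) UNIV UNIV"
    by (rule bij_betwI[where g="\<lambda>k. k - n"]) auto
  have us1: "(\<lambda>d. u (d + n)) summable_on UNIV"
    using summable_on_reindex_bij_betw[OF bij, of u] us by simp
  define K where "K = q powr (- 2 * real_of_int n) + q powr (2 * real_of_int n)"
  have K: "K \<ge> 0" by (simp add: K_def)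
  define F where "F = {d. (d \<ge> 1) \<noteq> (d + n \<ge> 1)}"
  have finF: "finite F"
  proof (rule finite_subset)
    show "F \<subseteq> {- \<bar>n\<bar> - 1 .. \<bar>n\<bar> + 1}" by (auto simp: F_def)
  qed simp
  show ?thesis
  proof (rule summable_except_finite[OF _ _ finF])
    show "(\<lambda>d. K * u (d + n)) summable_on UNIV" by (rule summable_on_cmult_right[OF us1])
  next
    fix d :: int
    show "0 \<le> exp (\<beta> * (Jm J (d - 1 + n) + Jm J (d + n))) * wt q c d"
      using wt_pos[OF assms(2)] by (simp add: less_imp_le)
  next
    fix d :: int assume "d \<in> UNIV - F"
    then have "(d \<ge> 1) = (d + n \<ge> 1)" by (auto simp: F_def)
    from wt_shift[OF assms(2) this, of c] 
    have "exp (\<beta> * (Jm J (d - 1 + n) + Jm J (d + n))) * wt q c d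
       \<le> exp (\<beta> * (Jm J (d - 1 + n) + Jm J (d + n))) * (K * wt q c (d + n))"
      unfolding K_def by (intro mult_left_mono) auto
    also have "\<dots> = K * u (d + n)" by (simp add: u_def algebra_simps)
    finally show "exp (\<beta> * (Jm J (d - 1 + n) + Jm J (d + n))) * wt q c d \<le> K * u (d + n)" .
  qed
qed

definition Gn :: "(int \<Rightarrow> real) \<Rightarrow> real \<Rightarrow> real \<Rightarrow> real \<Rightarrow> int \<Rightarrow> int set \<Rightarrow> real" where
  "Gn J \<beta> q c n D = exp (- \<beta> * (\<Sum>i\<in>ifs (cfg D). J (i+n))) * q powr f_c c (cfg D)"

lemma Gn_nonneg: "Gn J \<beta> q c n D \<ge> 0" by (simp add: Gn_def)

lemma Gn_summable:
  fixes c \<beta> q :: real and J :: "int \<Rightarrow> real"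
  assumes "\<beta> \<ge> 0" and "0 < q" and "q < 1"
    and h1: "(\<lambda>i::int. 1 / (1 + q powr (2 * (real_of_int i - c)) * exp (\<beta> * J (i - 1))
            / (exp (\<beta> * \<bar>J i\<bar>) + q^2 * exp (\<beta> * \<bar>J (i - 2)\<bar>)))) summable_on {..0}"
    and h2: "(\<lambda>i::int. 1 / (1 + q powr (- 2 * (real_of_int i - c)) * exp (\<beta> * J (i - 1))
            / (exp (\<beta> * \<bar>J i\<bar>) + q powr (-2) * exp (\<beta> * \<bar>J (i - 2)\<bar>)))) summable_on {1..}"
  shows "Gn J \<beta> q c n summable_on {D. finite D}"
proof -
  define a where "a d = exp (\<beta> * (Jm J (d - 1 + n) + Jm J (d + n))) * wt q c d" for d
  have as: "a summable_on UNIV" unfolding a_def by (rule a_summable[OF assms])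
  have ann: "a d \<ge> 0" for d using wt_pos[OF assms(2), of c d] by (simp add: a_def)
  have ps: "(\<lambda>D. \<Prod>d\<in>D. a d) summable_on {D. finite D}" by (rule summable_prod_finite_sets[OF ann as])
  show ?thesis
  proof (rule summable_on_comparison_test)
    show "(\<lambda>D. exp (\<beta> * Jm J n) * (\<Prod>d\<in>D. a d)) summable_on {D. finite D}"
      by (rule summable_on_cmult_right[OF ps])
  next
    fix D :: "int set" assume "D \<in> {D. finite D}"
    then have fD: "finite D" by simp
    have "Gn J \<beta> q c n D \<le> (exp (\<beta> * Jm J n) * (\<Prod>d\<in>D. exp (\<beta> * (Jm J (d - 1 + n) + Jm J (d + n))))) * (\<Prod>d\<in>D. wt q c d)"
      unfolding Gn_def qpowr_fc[OF fD assms(2)]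
      by (rule mult_right_mono[OF exp_ifs_bound[OF fD assms(1)]]) (simp add: prod_nonneg wt_pos[OF assms(2)] less_imp_le)
    also have "\<dots> = exp (\<beta> * Jm J n) * (\<Prod>d\<in>D. a d)"
      by (simp add: a_def prod.distrib)
    finally show "Gn J \<beta> q c n D \<le> exp (\<beta> * Jm J n) * (\<Prod>d\<in>D. a d)" .
  next
    fix D :: "int set" show "0 \<le> Gn J \<beta> q c n D" by (rule Gn_nonneg)
  qed
qed

lemma H_J_ifs: "H_J J \<sigma> = (\<Sum>i\<in>ifs \<sigma>. J (i + 0))"
  by (simp add: H_J_def ifs_def)

lemma weight_cfg: "weight J \<beta> q c (cfg D) = Gn J \<beta> q c 0 D"
  by (simp add: weight_def Gn_def H_J_ifs)

lemma weightF_cfg: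
  "weight J \<beta> q c (cfg D) * ((if Nfun (cfg D) = 0 then 1 else 0) * exp (- \<beta> * H_n J n (cfg D)))
   = (if Nfun (cfg D) = 0 then Gn J \<beta> q c n D else 0)"
proof -
  have "H_J J (cfg D) + H_n J n (cfg D) = (\<Sum>i\<in>ifs (cfg D). J (i + n))"
    by (simp add: H_J_def H_n_def ifs_def sum.distrib[symmetric])
  then have "exp (- \<beta> * H_J J (cfg D)) * exp (- \<beta> * H_n J n (cfg D)) = exp (- \<beta> * (\<Sum>i\<in>ifs (cfg D). J (i + n)))"
    by (simp only: exp_add[symmetric]) (metis distrib_left)
  then show ?thesis by (simp add: weight_def Gn_def mult_ac)
qed

lemma Zpart_pos:
  fixes c \<beta> q :: real and J :: "int \<Rightarrow> real"
  assumes "\<beta> \<ge> 0" and "0 < q" and "q < 1"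
    and h1: "(\<lambda>i::int. 1 / (1 + q powr (2 * (real_of_int i - c)) * exp (\<beta> * J (i - 1))
            / (exp (\<beta> * \<bar>J i\<bar>) + q^2 * exp (\<beta> * \<bar>J (i - 2)\<bar>)))) summable_on {..0}"
    and h2: "(\<lambda>i::int. 1 / (1 + q powr (- 2 * (real_of_int i - c)) * exp (\<beta> * J (i - 1))
            / (exp (\<beta> * \<bar>J i\<bar>) + q powr (-2) * exp (\<beta> * \<bar>J (i - 2)\<bar>)))) summable_on {1..}"
  shows "Zpart J \<beta> q c > 0"
proof -
  have s: "(weight J \<beta> q c \<circ> cfg) summable_on {D. finite D}"
    using Gn_summable[OF assms, of 0] by (simp add: o_def weight_cfg)
  then have s2: "weight J \<beta> q c summable_on configB"
    unfolding configB_image by (subst summable_on_reindex) (auto intro: inj_on_subset[OF inj_cfg])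
  have c0: "cfg {} \<in> configB" by (rule cfg_configB) simp
  have "0 < weight J \<beta> q c (cfg {})" using assms(2) by (simp add: weight_def)
  also have "\<dots> = sum (weight J \<beta> q c) {cfg {}}" by simp
  also have "\<dots> \<le> infsum (weight J \<beta> q c) configB"
    by (rule finite_sum_le_infsum[OF s2]) (use c0 in \<open>auto simp: weight_def\<close>)
  finally show ?thesis by (simp add: Zpart_def)
qed

fun runs :: "nat list \<Rightarrow> int list \<Rightarrow> int set" where
  "runs (m # ms) (s # ss) = {s ..< s + int m} \<union> runs ms ss"
| "runs _ _ = {}"

fun adm :: "int \<Rightarrow> nat list \<Rightarrow> int list \<Rightarrow> bool" where
  "adm k [] [] = True"
| "adm k (m # ms) (s # ss) = (k \<le> s \<and> adm (s + int m + 1) ms ss)"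
| "adm k _ _ = False"

lemma adm_length: "adm k ms ss \<Longrightarrow> length ss = length ms"
  by (induction k ms ss rule: adm.induct) auto

lemma adm_mono: "adm k ms ss \<Longrightarrow> k' \<le> k \<Longrightarrow> adm k' ms ss"
  by (induction k ms ss rule: adm.induct) auto

lemma runs_ge: "adm k ms ss \<Longrightarrow> runs ms ss \<subseteq> {k..}"
  by (induction k ms ss rule: adm.induct) auto

lemma finite_runs: "finite (runs ms ss)"
  by (induction ms ss rule: runs.induct) auto

definition gaps :: "nat list \<Rightarrow> int list \<Rightarrow> bool" where
  "gaps ms ss = (\<forall>i. i + 1 < length ss \<longrightarrow> ss!(i+1) - ss!i \<ge> int (ms!i) + 1)"

lemma gaps_Cons: "gaps (m # ms) (s # ss) \<longleftrightarrow> (ss \<noteq> [] \<longrightarrow> ss!0 \<ge> s + int m + 1) \<and> gaps ms ss"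
proof
  assume L: "gaps (m # ms) (s # ss)"
  have a: "int ((m#ms)!i) + 1 \<le> (s#ss)!(i+1) - (s#ss)!i" if "i+1 < length (s#ss)" for i
    using L that unfolding gaps_def by blast
  show "(ss \<noteq> [] \<longrightarrow> ss!0 \<ge> s + int m + 1) \<and> gaps ms ss"
  proof
    show "ss \<noteq> [] \<longrightarrow> ss!0 \<ge> s + int m + 1"
    proof
      assume "ss \<noteq> []"
      then have "int m + 1 \<le> ss!0 - s" using a[of 0] by simp
      then show "ss!0 \<ge> s + int m + 1" by linarith
    qed
    show "gaps ms ss" unfolding gaps_def
    proof (intro allI impI)
      fix i assume "i+1 < length ss"
      then show "int (ms!i) + 1 \<le> ss!(i+1) - ss!i" using a[of "Suc i"] by simp
    qed
  qed
next
  assume R: "(ss \<noteq> [] \<longrightarrow> ss!0 \<ge> s + int m + 1) \<and> gaps ms ss"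
  show "gaps (m # ms) (s # ss)" unfolding gaps_def
  proof (intro allI impI)
    fix i assume i: "i+1 < length (s#ss)"
    show "int ((m#ms)!i) + 1 \<le> (s#ss)!(i+1) - (s#ss)!i"
    proof (cases i)
      case 0 then show ?thesis using R i by auto
    next
      case (Suc j) then show ?thesis using R i unfolding gaps_def by simp
    qed
  qed
qed

lemma gaps_mono:
  assumes "gaps ms ss" "j < length ss" shows "ss ! 0 \<le> ss ! j"
  using assms
proof (induction j)
  case (Suc j)
  then have "ss ! 0 \<le> ss ! j" by simp
  moreover have "int (ms ! j) + 1 \<le> ss ! (j + 1) - ss ! j" using Suc.prems unfolding gaps_def by auto
  ultimately show ?case by simp
qed simp

lemma adm_iff: "adm k ms ss \<longleftrightarrow> length ss = length ms \<and> (\<forall>j<length ss. ss!j \<ge> k) \<and> gaps ms ss"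
proof (induction ms arbitrary: ss k)
  case Nil then show ?case by (cases ss) (auto simp: gaps_def)
next
  case (Cons m ms)
  show ?case
  proof (cases ss)
    case Nil then show ?thesis by simp
  next
    case (Cons s ss')
    have "adm k (m # ms) ss \<longleftrightarrow> k \<le> s \<and> length ss' = length ms \<and> (\<forall>j<length ss'. ss'!j \<ge> s + int m + 1) \<and> gaps ms ss'"
      using Cons.IH Cons by simp
    also have "\<dots> \<longleftrightarrow> length ss = length (m # ms) \<and> (\<forall>j<length ss. ss!j \<ge> k) \<and> gaps (m # ms) ss"
    proof
      assume A: "k \<le> s \<and> length ss' = length ms \<and> (\<forall>j<length ss'. ss'!j \<ge> s + int m + 1) \<and> gaps ms ss'"
      have "\<forall>j<length ss. ss!j \<ge> k"
      proof (intro allI impI)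
        fix j assume "j < length ss"
        then show "ss!j \<ge> k" using A Cons by (cases j) force+
      qed
      then show "length ss = length (m # ms) \<and> (\<forall>j<length ss. ss!j \<ge> k) \<and> gaps (m # ms) ss"
        using A Cons by (auto simp: gaps_Cons)
    next
      assume A: "length ss = length (m # ms) \<and> (\<forall>j<length ss. ss!j \<ge> k) \<and> gaps (m # ms) ss"
      then have g: "gaps ms ss'" and g0: "ss' \<noteq> [] \<longrightarrow> ss'!0 \<ge> s + int m + 1" using Cons by (auto simp: gaps_Cons)
      have "\<forall>j<length ss'. ss'!j \<ge> s + int m + 1"
      proof (intro allI impI)
        fix j assume j: "j < length ss'"
        then have "ss' \<noteq> []" by auto
        then show "ss'!j \<ge> s + int m + 1" using gaps_mono[OF g j] g0 by linarith
      qed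
      then show "k \<le> s \<and> length ss' = length ms \<and> (\<forall>j<length ss'. ss'!j \<ge> s + int m + 1) \<and> gaps ms ss'"
        using A Cons g by (auto dest: spec[of _ 0])
    qed
    finally show ?thesis .
  qed
qed

lemma adm_s_eq: "adm_s ms = {ss. adm 1 ms ss}"
  unfolding adm_s_def adm_iff gaps_def by auto

lemma adm_r_eq: "adm_r ls = {rs. adm 1 ls (map (\<lambda>r. 1 - r) rs)}"
  unfolding adm_r_def adm_iff gaps_def by (auto simp: algebra_simps)


lemma runs_Cons_disj:
  assumes "adm (s + int m + 1) ms ss"
  shows "{s ..< s + int m} \<inter> runs ms ss = {}"
  using runs_ge[OF assms] by auto

lemma runs_inj:
  assumes "\<forall>m\<in>set ms. m \<ge> 1" "\<forall>m\<in>set ms'. m \<ge> 1" "adm k ms ss" "adm k' ms' ss'"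
    "runs ms ss = runs ms' ss'"
  shows "ms = ms' \<and> ss = ss'"
  using assms
proof (induction ms arbitrary: ss ms' ss' k k')
  case Nil
  then have ss: "ss = []" by (cases ss) auto
  show ?case
  proof (cases ms')
    case Nil then show ?thesis using Nil.prems ss by (cases ss') auto
  next
    case (Cons m' ms0)
    then obtain s' ss0 where "ss' = s' # ss0" using Nil.prems by (cases ss') auto
    then have "s' \<in> runs ms' ss'" using Cons Nil.prems by auto
    then show ?thesis using Nil.prems ss by simp
  qed
next
  case (Cons m ms)
  obtain s ss0 where ss: "ss = s # ss0" using Cons.prems by (cases ss) auto
  have m1: "m \<ge> 1" using Cons.prems by auto
  have a0: "adm (s + int m + 1) ms ss0" and ks: "k \<le> s" using Cons.prems ss by auto
  have sin: "s \<in> runs (m # ms) ss" using ss m1 by auto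
  obtain m' ms0 s' ss0' where ms': "ms' = m' # ms0" and ss': "ss' = s' # ss0'"
  proof (cases ms')
    case Nil then show ?thesis using Cons.prems sin by (cases ss') auto
  next
    case (Cons m' ms0)
    then show ?thesis using Cons.prems that by (cases ss') auto
  qed
  have m1': "m' \<ge> 1" using Cons.prems ms' by auto
  have a0': "adm (s' + int m' + 1) ms0 ss0'" using Cons.prems ms' ss' by auto
  have R: "runs ms ss0 \<subseteq> {s + int m + 1..}" by (rule runs_ge[OF a0])
  have R': "runs ms0 ss0' \<subseteq> {s' + int m' + 1..}" by (rule runs_ge[OF a0'])
  have E: "{s ..< s + int m} \<union> runs ms ss0 = {s' ..< s' + int m'} \<union> runs ms0 ss0'"
    using Cons.prems ss ms' ss' by simp
  have s'in: "s' \<in> {s ..< s + int m} \<union> runs ms ss0" using E m1' by auto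
  have sin': "s \<in> {s' ..< s' + int m'} \<union> runs ms0 ss0'" using E m1 by auto
  have "s \<le> s'" using s'in R by auto
  moreover have "s' \<le> s" using sin' R' by auto
  ultimately have sseq: "s = s'" by simp
  have "\<not> int m < int m'"
  proof
    assume "int m < int m'"
    then have "s + int m \<in> {s' ..< s' + int m'} \<union> runs ms0 ss0'" using sseq by auto
    then have "s + int m \<in> {s ..< s + int m} \<union> runs ms ss0" using E by simp
    then show False using R by auto
  qed
  moreover have "\<not> int m' < int m"
  proof
    assume "int m' < int m"
    then have "s + int m' \<in> {s ..< s + int m} \<union> runs ms ss0" using sseq by auto
    then have "s + int m' \<in> {s' ..< s' + int m'} \<union> runs ms0 ss0'" using E by simp
    then show False using R' sseq by auto
  qed
  ultimately have mm: "m = m'" by simp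
  have "runs ms ss0 = runs ms0 ss0'"
  proof -
    have "runs ms ss0 = ({s ..< s + int m} \<union> runs ms ss0) - {s ..< s + int m}" using R by auto
    also have "\<dots> = ({s' ..< s' + int m'} \<union> runs ms0 ss0') - {s' ..< s' + int m'}" using E sseq mm by simp
    also have "\<dots> = runs ms0 ss0'" using R' by auto
    finally show ?thesis .
  qed
  then have "ms = ms0 \<and> ss0 = ss0'"
    using Cons.IH[OF _ _ a0 a0'] Cons.prems ms' by auto
  then show ?case using ss ss' ms' sseq mm by simp
qed

lemma runs_surj:
  assumes "finite S" "S \<subseteq> {k..}"
  shows "\<exists>ms ss. (\<forall>m\<in>set ms. m \<ge> 1) \<and> adm k ms ss \<and> runs ms ss = S"
  using assms
proof (induction "card S" arbitrary: S k rule: less_induct)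
  case less
  show ?case
  proof (cases "S = {}")
    case True then show ?thesis by (intro exI[of _ "[]"]) auto
  next
    case False
    define s where "s = Min S"
    have sS: "s \<in> S" using False less.prems by (simp add: s_def)
    have smin: "\<And>x. x \<in> S \<Longrightarrow> s \<le> x" using less.prems by (simp add: s_def)
    have ex: "\<exists>m::nat. s + int m \<notin> S"
    proof
      have "Max S + 1 \<notin> S" using less.prems Max_ge by fastforce
      moreover have "s + int (nat (Max S - s + 1)) = Max S + 1" using smin[OF Max_in[OF less.prems(1) False]] by simp
      ultimately show "s + int (nat (Max S - s + 1)) \<notin> S" by simp
    qed
    define m where "m = (LEAST m::nat. s + int m \<notin> S)"
    have mS: "s + int m \<notin> S" unfolding m_def by (rule LeastI_ex[OF ex])
    have below: "\<And>j::nat. j < m \<Longrightarrow> s + int j \<in> S" unfolding m_def using not_less_Least by blast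
    have m1: "m \<ge> 1" using mS sS by (cases m) auto
    have sub: "{s ..< s + int m} \<subseteq> S"
    proof
      fix x assume "x \<in> {s ..< s + int m}"
      then have "x = s + int (nat (x - s))" "nat (x - s) < m" by auto
      then show "x \<in> S" using below by metis
    qed
    define S' where "S' = S - {s ..< s + int m}"
    have fin': "finite S'" using less.prems by (simp add: S'_def)
    have "s \<in> {s ..< s + int m}" using m1 by simp
    then have "s \<notin> S'" by (simp add: S'_def)
    moreover have "S' \<subseteq> S" by (auto simp: S'_def)
    ultimately have "S' \<subset> S" using sS by blast
    then have card': "card S' < card S" using less.prems(1) by (rule psubset_card_mono[rotated])
    have ge': "S' \<subseteq> {s + int m + 1..}"
    proof
      fix x assume x: "x \<in> S'"
      then have "x \<in> S" "x \<notin> {s ..< s + int m}" by (auto simp: S'_def)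
      moreover have "x \<noteq> s + int m" using x mS by (auto simp: S'_def)
      ultimately show "x \<in> {s + int m + 1..}" using smin by fastforce
    qed
    obtain ms ss where IH: "\<forall>m\<in>set ms. m \<ge> 1" "adm (s + int m + 1) ms ss" "runs ms ss = S'"
      using less.hyps[OF card' fin' ge'] by blast
    have ks: "k \<le> s" using sS less.prems by auto
    have "runs (m # ms) (s # ss) = S" using IH(3) sub by (auto simp: S'_def)
    then show ?thesis using IH ks m1 by (intro exI[of _ "m # ms"] exI[of _ "s # ss"]) auto
  qed
qed

lemma card_runs: "adm k ms ss \<Longrightarrow> card (runs ms ss) = sum_list ms"
proof (induction k ms ss rule: adm.induct)
  case (2 k m ms s ss)
  then have a: "adm (s + int m + 1) ms ss" by simp
  have "card (runs (m # ms) (s # ss)) = card {s ..< s + int m} + card (runs ms ss)"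
    using runs_Cons_disj[OF a] by (simp add: card_Un_disjoint finite_runs)
  then show ?case using 2 by simp
qed auto

lemma sum_interval_int: "(\<Sum>i\<in>{s ..< s + int m}. real_of_int i) = real_of_int s * real m + real m * (real m - 1) / 2"
proof (induction m)
  case (Suc m)
  have "{s ..< s + int (Suc m)} = insert (s + int m) {s ..< s + int m}" by auto
  then show ?case using Suc by (simp add: field_simps)
qed simp

lemma sum_runs:
  "adm k ms ss \<Longrightarrow> (\<Sum>i\<in>runs ms ss. real_of_int i)
     = (\<Sum>j<length ms. real_of_int (ss!j) * real (ms!j) + real (ms!j) * (real (ms!j) - 1) / 2)"
proof (induction k ms ss rule: adm.induct)
  case (2 k m ms s ss)
  then have a: "adm (s + int m + 1) ms ss" by simp
  have "(\<Sum>i\<in>runs (m # ms) (s # ss). real_of_int i) = (\<Sum>i\<in>{s ..< s + int m}. real_of_int i) + (\<Sum>i\<in>runs ms ss. real_of_int i)"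
    using runs_Cons_disj[OF a] by (simp add: sum.union_disjoint finite_runs)
  then show ?case using 2 a by (simp del: sum.lessThan_Suc add: sum.lessThan_Suc_shift sum_interval_int)
qed auto

definition rifs :: "int set \<Rightarrow> int set" where
  "rifs S = {i. i \<ge> 0 \<and> ((i \<in> S) \<noteq> (i + 1 \<in> S))}"

lemma rifs_Cons:
  assumes "adm (s + int m + 1) ms ss" "m \<ge> 1" "s \<ge> 1"
  shows "rifs ({s ..< s + int m} \<union> runs ms ss) = {s - 1, s + int m - 1} \<union> rifs (runs ms ss)"
    and "{s - 1, s + int m - 1} \<inter> rifs (runs ms ss) = {}"
proof -
  have R: "\<And>x. x \<in> runs ms ss \<Longrightarrow> x \<ge> s + int m + 1" using runs_ge[OF assms(1)] by auto
  show "rifs ({s ..< s + int m} \<union> runs ms ss) = {s - 1, s + int m - 1} \<union> rifs (runs ms ss)"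
  proof (intro set_eqI)
    fix i
    show "i \<in> rifs ({s ..< s + int m} \<union> runs ms ss) \<longleftrightarrow> i \<in> {s - 1, s + int m - 1} \<union> rifs (runs ms ss)"
    proof (cases "i < s - 1")
      case True
      then have "i \<notin> runs ms ss" "i + 1 \<notin> runs ms ss" using R by force+
      then show ?thesis using True assms by (auto simp: rifs_def)
    next
      case False
      note F = False
      show ?thesis
      proof (cases "i \<le> s + int m - 1")
        case True
        then have "i \<notin> runs ms ss" "i + 1 \<notin> runs ms ss" using R by force+
        then show ?thesis using True F assms by (auto simp: rifs_def)
      next
        case False
        then show ?thesis using F assms by (auto simp: rifs_def)
      qed
    qed
  qed
  show "{s - 1, s + int m - 1} \<inter> rifs (runs ms ss) = {}"
    using R assms by (force simp: rifs_def)
qed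

lemma finite_rifs: "finite S \<Longrightarrow> finite (rifs S)"
proof -
  assume "finite S"
  moreover have "rifs S \<subseteq> S \<union> (\<lambda>x. x - 1) ` S"
    by (auto simp: rifs_def image_iff) (metis add_diff_cancel_right')
  ultimately show ?thesis by (meson finite_Un finite_imageI finite_subset)
qed

lemma sum_rifs_runs:
  "adm k ms ss \<Longrightarrow> k \<ge> 1 \<Longrightarrow> \<forall>m\<in>set ms. m \<ge> 1 \<Longrightarrow>
   (\<Sum>i\<in>rifs (runs ms ss). K i) = (\<Sum>j<length ms. K (ss!j - 1) + K (ss!j + int (ms!j) - 1))"
proof (induction k ms ss rule: adm.induct)
  case (1 k) then show ?case by (simp add: rifs_def)
next
  case (2 k m ms s ss)
  then have a: "adm (s + int m + 1) ms ss" and m1: "m \<ge> 1" and s1: "s \<ge> 1" by auto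
  have ne: "s - 1 \<noteq> s + int m - 1" using m1 by simp
  have "(\<Sum>i\<in>rifs (runs (m # ms) (s # ss)). K i) = (\<Sum>i\<in>{s - 1, s + int m - 1}. K i) + (\<Sum>i\<in>rifs (runs ms ss). K i)"
    by (simp only: runs.simps, subst rifs_Cons(1)[OF a m1 s1], rule sum.union_disjoint)
      (use rifs_Cons(2)[OF a m1 s1] in \<open>auto simp: finite_rifs finite_runs\<close>)
  also have "(\<Sum>i\<in>rifs (runs ms ss). K i) = (\<Sum>j<length ms. K (ss!j - 1) + K (ss!j + int (ms!j) - 1))"
    using 2 a by simp
  finally show ?case using ne by (simp del: sum.lessThan_Suc add: sum.lessThan_Suc_shift)
qed auto

lemma ifs_decomp:
  fixes K :: "int \<Rightarrow> real"
  assumes fS: "finite S" and S1: "S \<subseteq> {1..}" and fT: "finite T" and T0: "T \<subseteq> {..0}"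
  shows "(\<Sum>i\<in>ifs (cfg (T \<union> S)). K i) = (\<Sum>i\<in>rifs S. K i) + (\<Sum>j\<in>rifs ((\<lambda>x. 1 - x) ` T). K (- j))
          + (if 0 \<notin> T \<and> 1 \<notin> S then K 0 else - K 0)"
proof -
  define S' where "S' = (\<lambda>x. 1 - x) ` T"
  define D where "D = T \<union> S"
  define R1 where "R1 = rifs S"
  define R2 where "R2 = uminus ` rifs S'"
  have fS': "finite S'" using fT by (simp add: S'_def)
  have fR1: "finite R1" using fS by (simp add: R1_def finite_rifs)
  have fR2: "finite R2" using fS' by (simp add: R2_def finite_rifs)
  have fI: "finite (ifs (cfg D))" unfolding D_def by (rule finite_ifs_cfg) (use fS fT in simp)
  have inS: "x \<in> S \<Longrightarrow> x \<ge> 1" for x using S1 by auto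
  have inT: "x \<in> T \<Longrightarrow> x \<le> 0" for x using T0 by auto
  have cpos: "i \<ge> 1 \<Longrightarrow> cfg D i = (if i \<in> S then -1 else 1)" for i
    using inT by (auto simp: cfg_def D_def gs_def)
  have cneg: "i \<le> 0 \<Longrightarrow> cfg D i = (if i \<in> T then 1 else -1)" for i
    using inS by (auto simp: cfg_def D_def gs_def) (use inS in force)
  have S'iff: "j \<in> S' \<longleftrightarrow> 1 - j \<in> T" for j
    unfolding S'_def
  proof
    assume "j \<in> (\<lambda>x. 1 - x) ` T" then show "1 - j \<in> T" by auto
  next
    assume "1 - j \<in> T" then show "j \<in> (\<lambda>x. 1 - x) ` T" by (rule rev_image_eqI) simp
  qed
  have uiff: "i \<in> uminus ` X \<longleftrightarrow> - i \<in> X" for i :: int and X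
  proof
    assume "i \<in> uminus ` X" then show "- i \<in> X" by auto
  next
    assume "- i \<in> X" then show "i \<in> uminus ` X" by (rule rev_image_eqI) simp
  qed
  have pos: "i \<ge> 1 \<Longrightarrow> i \<in> ifs (cfg D) \<longleftrightarrow> i \<in> R1" for i
    by (simp add: ifs_def cpos R1_def rifs_def)
  have neg: "i \<le> -1 \<Longrightarrow> i \<in> ifs (cfg D) \<longleftrightarrow> i \<in> R2" for i
  proof -
    assume i: "i \<le> -1"
    have "i \<in> R2 \<longleftrightarrow> - i \<in> rifs S'" by (simp add: R2_def uiff)
    also have "\<dots> \<longleftrightarrow> (1 + i \<in> T) \<noteq> (i \<in> T)" using i by (simp add: rifs_def S'iff)
    also have "\<dots> \<longleftrightarrow> i \<in> ifs (cfg D)" using i by (auto simp: ifs_def cneg add.commute)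
    finally show ?thesis by simp
  qed
  have R1ge: "i \<in> R1 \<Longrightarrow> i \<ge> 0" for i by (simp add: R1_def rifs_def)
  have R2le: "i \<in> R2 \<Longrightarrow> i \<le> 0" for i by (auto simp: R2_def uiff rifs_def)
  have zI: "0 \<in> ifs (cfg D) \<longleftrightarrow> (0 \<in> T) = (1 \<in> S)"
    by (auto simp: ifs_def cpos cneg)
  have "0 \<notin> S" using inS by force
  then have z1: "0 \<in> R1 \<longleftrightarrow> 1 \<in> S" by (auto simp: R1_def rifs_def)
  have z2: "0 \<in> R2 \<longleftrightarrow> 0 \<in> T"
  proof -
    have "0 \<in> R2 \<longleftrightarrow> 0 \<in> rifs S'" by (simp add: R2_def uiff)
    also have "\<dots> \<longleftrightarrow> (1 - 0 \<in> T) \<noteq> (1 - 1 \<in> T)" by (simp add: rifs_def S'iff)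
    also have "\<dots> \<longleftrightarrow> 0 \<in> T" using inT[of 1] by auto
    finally show ?thesis .
  qed
  have split: "ifs (cfg D) - {0} = (R1 - {0}) \<union> (R2 - {0})"
  proof (intro set_eqI)
    fix i :: int
    consider "i \<ge> 1" | "i = 0" | "i \<le> -1" by linarith
    then show "i \<in> ifs (cfg D) - {0} \<longleftrightarrow> i \<in> (R1 - {0}) \<union> (R2 - {0})"
      by cases (use pos neg R1ge R2le in force)+
  qed
  have disj: "(R1 - {0}) \<inter> (R2 - {0}) = {}" using R1ge R2le by force
  have s_split: "(\<Sum>i\<in>A. K i) = (\<Sum>i\<in>A - {0}. K i) + (if 0 \<in> A then K 0 else 0)" if "finite A" for A
    using that by (cases "0 \<in> A") (simp_all add: sum.remove)
  have r2: "(\<Sum>i\<in>R2. K i) = (\<Sum>j\<in>rifs S'. K (- j))"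
    unfolding R2_def by (subst sum.reindex) (auto simp: inj_on_def o_def)
  have "(\<Sum>i\<in>ifs (cfg D). K i) = (\<Sum>i\<in>R1 - {0}. K i) + (\<Sum>i\<in>R2 - {0}. K i) + (if 0 \<in> ifs (cfg D) then K 0 else 0)"
    using s_split[OF fI] split disj fR1 fR2 by (simp add: sum.union_disjoint)
  also have "\<dots> = (\<Sum>i\<in>R1. K i) + (\<Sum>i\<in>R2. K i) + (if 0 \<notin> T \<and> 1 \<notin> S then K 0 else - K 0)"
    using s_split[OF fR1] s_split[OF fR2] zI z1 z2 by auto
  finally show ?thesis unfolding D_def R1_def r2 S'_def .
qed


definition fl :: "int list \<Rightarrow> int list" where "fl rs = map (\<lambda>r. 1 - r) rs"
definition TL :: "nat list \<Rightarrow> int list \<Rightarrow> int set" where "TL ls rs = (\<lambda>x. 1 - x) ` runs ls (fl rs)"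
definition Psi :: "(nat list \<times> nat list) \<times> (int list \<times> int list) \<Rightarrow> int set" where
  "Psi x = (case x of ((ls, ms), (rs, ss)) \<Rightarrow> TL ls rs \<union> runs ms ss)"
definition Kset :: "(nat list \<times> nat list) set" where
  "Kset = {(ls, ms). ls \<noteq> [] \<and> ms \<noteq> [] \<and> (\<forall>x\<in>set ls. x \<ge> 1) \<and>
                 (\<forall>x\<in>set ms. x \<ge> 1) \<and> sum_list ms = sum_list ls}"
definition Iset :: "((nat list \<times> nat list) \<times> (int list \<times> int list)) set" where
  "Iset = Sigma Kset (\<lambda>(ls, ms). adm_r ls \<times> adm_s ms)"
definition Eset :: "int set set" where
  "Eset = {D. finite D \<and> D \<noteq> {} \<and> card {d\<in>D. d \<ge> 1} = card {d\<in>D. d \<le> 0}}"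

lemma fl_fl[simp]: "fl (fl rs) = rs" by (simp add: fl_def o_def)

lemma img_inv[simp]: "(\<lambda>x::int. 1 - x) ` ((\<lambda>x. 1 - x) ` A) = A"
  by (simp add: image_image)

lemma inj_flip: "inj_on (\<lambda>x::int. 1 - x) A" by (auto simp: inj_on_def)

lemma adm_r_iff: "rs \<in> adm_r ls \<longleftrightarrow> adm 1 ls (fl rs)"
  by (simp add: adm_r_eq fl_def)

lemma TL_le: "adm 1 ls (fl rs) \<Longrightarrow> TL ls rs \<subseteq> {..0}"
  using runs_ge[of 1 ls "fl rs"] by (auto simp: TL_def)

lemma finite_TL: "finite (TL ls rs)" by (simp add: TL_def finite_runs)

lemma card_TL: "adm 1 ls (fl rs) \<Longrightarrow> card (TL ls rs) = sum_list ls"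
  unfolding TL_def by (simp add: card_image inj_flip card_runs)

lemma Psi_parts:
  assumes "adm 1 ls (fl rs)" "adm 1 ms ss"
  shows "{d \<in> TL ls rs \<union> runs ms ss. d \<ge> 1} = runs ms ss" "{d \<in> TL ls rs \<union> runs ms ss. d \<le> 0} = TL ls rs"
  using TL_le[OF assms(1)] runs_ge[OF assms(2)] by force+

lemma inj_Psi: "inj_on Psi Iset"
proof (rule inj_onI)
  fix x y assume x: "x \<in> Iset" and y: "y \<in> Iset" and e: "Psi x = Psi y"
  obtain ls ms rs ss where xx: "x = ((ls, ms), (rs, ss))" by (metis prod.collapse)
  obtain ls' ms' rs' ss' where yy: "y = ((ls', ms'), (rs', ss'))" by (metis prod.collapse)
  have a: "adm 1 ls (fl rs)" "adm 1 ms ss" "\<forall>x\<in>set ls. x \<ge> 1" "\<forall>x\<in>set ms. x \<ge> 1"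
    using x by (auto simp: xx Iset_def Kset_def adm_r_iff adm_s_eq)
  have b: "adm 1 ls' (fl rs')" "adm 1 ms' ss'" "\<forall>x\<in>set ls'. x \<ge> 1" "\<forall>x\<in>set ms'. x \<ge> 1"
    using y by (auto simp: yy Iset_def Kset_def adm_r_iff adm_s_eq)
  have e': "TL ls rs \<union> runs ms ss = TL ls' rs' \<union> runs ms' ss'" using e by (simp add: Psi_def xx yy)
  have "runs ms ss = runs ms' ss'" using Psi_parts(1)[OF a(1,2)] Psi_parts(1)[OF b(1,2)] e' by simp
  then have 1: "ms = ms' \<and> ss = ss'" using runs_inj[OF a(4) b(4) a(2) b(2)] by simp
  have "TL ls rs = TL ls' rs'" using Psi_parts(2)[OF a(1,2)] Psi_parts(2)[OF b(1,2)] e' by simp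
  then have "(\<lambda>x. 1 - x) ` TL ls rs = (\<lambda>x. 1 - x) ` TL ls' rs'" by simp
  then have "runs ls (fl rs) = runs ls' (fl rs')" by (simp add: TL_def)
  then have "ls = ls' \<and> fl rs = fl rs'" using runs_inj[OF a(3) b(3) a(1) b(1)] by simp
  then have 2: "ls = ls' \<and> rs = rs'" by (metis fl_fl)
  show "x = y" using 1 2 xx yy by simp
qed

lemma Psi_image: "Psi ` Iset = Eset"
proof
  show "Psi ` Iset \<subseteq> Eset"
  proof
    fix D assume "D \<in> Psi ` Iset"
    then obtain ls ms rs ss where x: "((ls, ms), (rs, ss)) \<in> Iset" and D: "D = TL ls rs \<union> runs ms ss"
      by (auto simp: Psi_def)
    have a: "adm 1 ls (fl rs)" "adm 1 ms ss" "\<forall>x\<in>set ls. x \<ge> 1" "\<forall>x\<in>set ms. x \<ge> 1"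
      "ms \<noteq> []" "sum_list ms = sum_list ls"
      using x by (auto simp: Iset_def Kset_def adm_r_iff adm_s_eq)
    obtain m ms0 where ms: "ms = m # ms0" using a(5) by (cases ms) auto
    obtain s ss0 where ss: "ss = s # ss0" using a(2) ms by (cases ss) auto
    have "s \<in> runs ms ss" using a(4) ms ss by auto
    then have ne: "D \<noteq> {}" using D by auto
    have "card {d\<in>D. d \<ge> 1} = card {d\<in>D. d \<le> 0}"
      unfolding D Psi_parts[OF a(1,2)] card_TL[OF a(1)] card_runs[OF a(2)] a(6) ..
    then show "D \<in> Eset" using ne D by (simp add: Eset_def finite_TL finite_runs)
  qed
next
  show "Eset \<subseteq> Psi ` Iset"
  proof
    fix D assume D: "D \<in> Eset"
    define S where "S = {d\<in>D. d \<ge> 1}"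
    define T where "T = {d\<in>D. d \<le> 0}"
    have fin: "finite S" "finite T" using D by (auto simp: Eset_def S_def T_def)
    have cST: "card S = card T" using D by (simp add: Eset_def S_def T_def)
    obtain ms ss where m: "\<forall>m\<in>set ms. m \<ge> 1" "adm 1 ms ss" "runs ms ss = S"
      using runs_surj[OF fin(1), of 1] by (auto simp: S_def)
    have "(\<lambda>x. 1 - x) ` T \<subseteq> {1..}" by (auto simp: T_def)
    then obtain ls ss' where l: "\<forall>m\<in>set ls. m \<ge> 1" "adm 1 ls ss'" "runs ls ss' = (\<lambda>x. 1 - x) ` T"
      using runs_surj[of "(\<lambda>x. 1 - x) ` T" 1] fin(2) by auto
    define rs where "rs = fl ss'"
    have l2: "adm 1 ls (fl rs)" using l by (simp add: rs_def)
    have TLeq: "TL ls rs = T" by (simp add: TL_def rs_def l(3))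
    have DD: "D = TL ls rs \<union> runs ms ss" using TLeq m(3) by (auto simp: S_def T_def)
    have cS: "card S = sum_list ms" using card_runs[OF m(2)] m(3) by simp
    have cT: "card T = sum_list ls" using card_TL[OF l2] TLeq by simp
    have "D \<noteq> {}" using D by (simp add: Eset_def)
    have DST: "D = S \<union> T" by (auto simp: S_def T_def)
    have "S \<noteq> {}"
    proof
      assume "S = {}"
      then have "card T = 0" using cST by simp
      then have "T = {}" using fin(2) by simp
      then show False using \<open>S = {}\<close> DST \<open>D \<noteq> {}\<close> by simp
    qed
    then have msne: "ms \<noteq> []" using m(3) by auto
    have "T \<noteq> {}" using \<open>S \<noteq> {}\<close> cST fin by auto
    then have lsne: "ls \<noteq> []" using TLeq by (auto simp: TL_def)
    have "((ls, ms), (rs, ss)) \<in> Iset"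
      using msne lsne m l l2 cS cT cST by (auto simp: Iset_def Kset_def adm_r_iff adm_s_eq)
    then show "D \<in> Psi ` Iset" using DD by (force simp: Psi_def)
  qed
qed

lemma prodQ_form:
  fixes q :: real and a :: "nat \<Rightarrow> real"
  assumes "q > 0"
  shows "(\<Prod>j<N. (q^2) powr (a j)) = q powr (2 * (\<Sum>j<N. a j))"
proof -
  have "(q^2) powr x = q powr (2 * x)" for x :: real
    using assms by (simp add: powr_powr[symmetric])
  then show ?thesis using assms by (simp add: powr_sum sum_distrib_left)
qed

lemma prodA_form:
  fixes q \<beta> :: real and a b :: "nat \<Rightarrow> real"
  assumes "q > 0"
  shows "(\<Prod>j<N. (q^2) powr (a j) * exp (- \<beta>) powr (b j)) = q powr (2 * (\<Sum>j<N. a j)) * exp (- \<beta> * (\<Sum>j<N. b j))"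
proof -
  have e: "exp (- \<beta>) powr y = exp (- \<beta> * y)" for y by (simp add: powr_def mult.commute)
  show ?thesis by (simp add: prod.distrib prodQ_form[OF assms] e exp_sum[symmetric] sum_distrib_left)
qed

lemma one_in_runs:
  assumes "adm 1 ms ss" "ms \<noteq> []" "\<forall>m\<in>set ms. m \<ge> 1"
  shows "1 \<in> runs ms ss \<longleftrightarrow> ss!0 = 1" and "ss!0 \<ge> 1"
proof -
  obtain m ms0 where ms: "ms = m # ms0" using assms(2) by (cases ms) auto
  obtain s ss0 where ss: "ss = s # ss0" using assms(1) ms by (cases ss) auto
  have a: "adm (s + int m + 1) ms0 ss0" "1 \<le> s" using assms(1) ms ss by auto
  have m1: "m \<ge> 1" using assms(3) ms by auto
  have "1 \<notin> runs ms0 ss0" using runs_ge[OF a(1)] a(2) by auto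
  then show "1 \<in> runs ms ss \<longleftrightarrow> ss!0 = 1" using ms ss a(2) m1 by auto
  show "ss!0 \<ge> 1" using ss a by simp
qed


definition Ap :: "(int \<Rightarrow> real) \<Rightarrow> real \<Rightarrow> real \<Rightarrow> int \<Rightarrow> nat list \<Rightarrow> int list \<Rightarrow> real" where
  "Ap J \<beta> Q n ms ss = (\<Prod>j<length ms.
      Q powr (real_of_int (ss!j) * real (ms!j)) *
      exp (- \<beta>) powr (J (ss!j + n - 1) + J (ss!j + int (ms!j) + n - 1)))"

definition Bp :: "(int \<Rightarrow> real) \<Rightarrow> real \<Rightarrow> real \<Rightarrow> int \<Rightarrow> nat list \<Rightarrow> int list \<Rightarrow> real" where
  "Bp J \<beta> Q n ls rs = (\<Prod>j<length ls.
      Q powr (- real_of_int (rs!j) * real (ls!j)) *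
      exp (- \<beta>) powr (J (rs!j + n) + J (rs!j - int (ls!j) + n)))"

definition Pq :: "real \<Rightarrow> nat list \<Rightarrow> real" where
  "Pq Q xs = (\<Prod>j<length xs. Q powr (real (xs!j) * (real (xs!j) - 1) / 2))"

lemma config_identity:
  fixes q c \<beta> :: real and J :: "int \<Rightarrow> real" and n :: int
  assumes q: "q > 0" and x: "((ls, ms), (rs, ss)) \<in> Iset"
  shows "Gn J \<beta> q c n (TL ls rs \<union> runs ms ss)
     = Pq (q^2) ls * Pq (q^2) ms * (if rs!0 < 0 \<and> ss!0 > 1 then exp (- \<beta> * J n) else exp (\<beta> * J n))
       * Bp J \<beta> (q^2) n ls rs * Ap J \<beta> (q^2) n ms ss"
proof -
  have a: "adm 1 ls (fl rs)" "adm 1 ms ss" "\<forall>x\<in>set ls. x \<ge> 1" "\<forall>x\<in>set ms. x \<ge> 1"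
      "ms \<noteq> []" "ls \<noteq> []" "sum_list ms = sum_list ls"
    using x by (auto simp: Iset_def Kset_def adm_r_iff adm_s_eq)
  have lrs: "length rs = length ls" using adm_length[OF a(1)] by (simp add: fl_def)
  have lss: "length ss = length ms" using adm_length[OF a(2)] .
  define S where "S = runs ms ss"
  define T where "T = TL ls rs"
  define S' where "S' = runs ls (fl rs)"
  have TS': "T = (\<lambda>x. 1 - x) ` S'" by (simp add: T_def S'_def TL_def)
  have S'T: "S' = (\<lambda>x. 1 - x) ` T" by (simp add: TS')
  have fS: "finite S" "finite T" "finite S'" by (simp_all add: S_def T_def S'_def finite_runs finite_TL)
  have S1: "S \<subseteq> {1..}" using runs_ge[OF a(2)] by (simp add: S_def)
  have T0: "T \<subseteq> {..0}" using TL_le[OF a(1)] by (simp add: T_def)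
  define Asum where "Asum = (\<Sum>j<length ms. J (ss!j + n - 1) + J (ss!j + int (ms!j) + n - 1))"
  define Bsum where "Bsum = (\<Sum>j<length ls. J (rs!j + n) + J (rs!j - int (ls!j) + n))"
  have A1: "(\<Sum>i\<in>rifs S. J (i + n)) = Asum"
    unfolding S_def Asum_def sum_rifs_runs[OF a(2) order_refl a(4)]
    by (rule sum.cong) (simp_all add: algebra_simps)
  have B1: "(\<Sum>j\<in>rifs S'. J (- j + n)) = Bsum"
    unfolding S'_def Bsum_def sum_rifs_runs[OF a(1) order_refl a(3)]
    by (rule sum.cong) (simp_all add: algebra_simps fl_def lrs)
  have z1: "1 \<notin> S \<longleftrightarrow> ss!0 > 1"
    using one_in_runs[OF a(2,5,4)] by (auto simp: S_def)
  have z0: "0 \<notin> T \<longleftrightarrow> rs!0 < 0"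
  proof -
    have "0 \<in> T \<longleftrightarrow> 1 \<in> S'" unfolding TS' by (auto simp: image_iff)
    also have "\<dots> \<longleftrightarrow> fl rs ! 0 = 1" using one_in_runs(1)[OF a(1,6,3)] by (simp add: S'_def)
    also have "\<dots> \<longleftrightarrow> rs!0 = 0" using a(6) lrs by (simp add: fl_def)
    finally have "0 \<in> T \<longleftrightarrow> rs!0 = 0" .
    moreover have "fl rs ! 0 \<ge> 1" using one_in_runs(2)[OF a(1,6,3)] .
    then have "rs!0 \<le> 0" using a(6) lrs by (simp add: fl_def)
    ultimately show ?thesis by auto
  qed
  have Isum: "(\<Sum>i\<in>ifs (cfg (T \<union> S)). J (i + n)) = Asum + Bsum + (if rs!0 < 0 \<and> ss!0 > 1 then J n else - J n)"
    using ifs_decomp[OF fS(1) S1 fS(2) T0, of "\<lambda>i. J (i + n)"] A1 B1 z0 z1 by (simp add: S'T)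
  have parts: "{d \<in> T \<union> S. d \<ge> 1} = S" "{d \<in> T \<union> S. d \<le> 0} = T"
    using Psi_parts[OF a(1,2)] by (simp_all add: S_def T_def)
  have cS: "card S = sum_list ms" using card_runs[OF a(2)] by (simp add: S_def)
  have cT: "card T = sum_list ls" using card_TL[OF a(1)] by (simp add: T_def)
  have cS': "card S' = sum_list ls" using card_runs[OF a(1)] by (simp add: S'_def)
  have sumS: "(\<Sum>i\<in>S. real_of_int i) = (\<Sum>j<length ms. real_of_int (ss!j) * real (ms!j) + real (ms!j) * (real (ms!j) - 1) / 2)"
    using sum_runs[OF a(2)] by (simp add: S_def)
  have sumS': "(\<Sum>i\<in>S'. real_of_int i) = (\<Sum>j<length ls. (1 - real_of_int (rs!j)) * real (ls!j) + real (ls!j) * (real (ls!j) - 1) / 2)"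
    using sum_runs[OF a(1)] by (simp add: S'_def fl_def lrs)
  have sumT: "(\<Sum>i\<in>T. real_of_int i) = real (sum_list ls) - (\<Sum>i\<in>S'. real_of_int i)"
  proof -
    have "(\<Sum>i\<in>T. real_of_int i) = (\<Sum>i\<in>S'. real_of_int (1 - i))"
      unfolding TS' by (subst sum.reindex) (auto simp: inj_flip)
    also have "\<dots> = real (card S') - (\<Sum>i\<in>S'. real_of_int i)" by (simp add: sum_subtractf)
    finally show ?thesis using cS' by simp
  qed
  have suml: "real (sum_list ls) = (\<Sum>j<length ls. real (ls!j))"
    by (simp add: sum_list_sum_nth atLeast0LessThan)
  define LL where "LL = (\<Sum>j<length ls. real (ls!j) * (real (ls!j) - 1) / 2)"
  define LM where "LM = (\<Sum>j<length ms. real (ms!j) * (real (ms!j) - 1) / 2)"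
  define RA where "RA = (\<Sum>j<length ms. real_of_int (ss!j) * real (ms!j))"
  define RB where "RB = (\<Sum>j<length ls. - real_of_int (rs!j) * real (ls!j))"
  have fval: "f_c c (cfg (T \<union> S)) = 2 * (LL + LM + RB + RA)"
  proof -
    have "f_c c (cfg (T \<union> S)) = 2 * (\<Sum>i\<in>S. (real_of_int i - c)) - 2 * (\<Sum>i\<in>T. (real_of_int i - c))"
      using fc_cfg[of "T \<union> S" c] fS parts by simp
    also have "\<dots> = 2 * (\<Sum>i\<in>S. real_of_int i) - 2 * (\<Sum>i\<in>T. real_of_int i)"
      using cS cT a(7) by (simp add: sum_subtractf)
    also have "\<dots> = 2 * (LL + LM + RB + RA)"
    proof -
      define X where "X = (\<Sum>j<length ls. real_of_int (rs!j) * real (ls!j))"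
      define Y where "Y = (\<Sum>j<length ls. real (ls!j))"
      have e1: "(\<Sum>i\<in>S'. real_of_int i) = Y - X + LL"
        unfolding sumS' X_def Y_def LL_def by (simp add: sum.distrib sum_subtractf left_diff_distrib)
      have e2: "RB = - X" unfolding RB_def X_def by (simp add: sum_negf)
      have e3: "(\<Sum>i\<in>S. real_of_int i) = RA + LM"
        unfolding sumS RA_def LM_def by (simp add: sum.distrib)
      show ?thesis unfolding sumT e3 suml Y_def[symmetric] e1 e2 by simp
    qed
    finally show ?thesis .
  qed
  have PL: "Pq (q^2) ls = q powr (2 * LL)" unfolding Pq_def LL_def by (rule prodQ_form[OF q])
  have PM: "Pq (q^2) ms = q powr (2 * LM)" unfolding Pq_def LM_def by (rule prodQ_form[OF q])
  have AP: "Ap J \<beta> (q^2) n ms ss = q powr (2 * RA) * exp (- \<beta> * Asum)"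
    unfolding Ap_def RA_def Asum_def by (rule prodA_form[OF q])
  have BP: "Bp J \<beta> (q^2) n ls rs = q powr (2 * RB) * exp (- \<beta> * Bsum)"
    unfolding Bp_def RB_def Bsum_def by (rule prodA_form[OF q])
  have "Gn J \<beta> q c n (TL ls rs \<union> runs ms ss) = exp (- \<beta> * (Asum + Bsum + (if rs!0 < 0 \<and> ss!0 > 1 then J n else - J n))) * q powr (2 * (LL + LM + RB + RA))"
    unfolding Gn_def T_def[symmetric] S_def[symmetric] Isum fval ..
  also have "\<dots> = q powr (2 * LL) * q powr (2 * LM) * (if rs!0 < 0 \<and> ss!0 > 1 then exp (- \<beta> * J n) else exp (\<beta> * J n))
       * (q powr (2 * RB) * exp (- \<beta> * Bsum)) * (q powr (2 * RA) * exp (- \<beta> * Asum))"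
    by (simp add: distrib_left powr_add exp_add[symmetric] algebra_simps)
  finally show ?thesis unfolding PL PM AP BP .
qed

lemma infsum_product_real:
  fixes f :: "'a \<Rightarrow> real" and g :: "'b \<Rightarrow> real"
  assumes s: "(\<lambda>(a,b). f a * g b) summable_on A \<times> B"
  shows "infsum f A * infsum g B = infsum (\<lambda>(a,b). f a * g b) (A \<times> B)"
proof -
  have s1: "(\<lambda>b. f a * g b) summable_on B" if "a \<in> A" for a
    using summable_on_SigmaD1[of "\<lambda>a b. f a * g b" A "\<lambda>_. B" a] s that by simp
  have inner: "infsum (\<lambda>b. f a * g b) B = f a * infsum g B" if "a \<in> A" for a
  proof (rule infsum_cmult_right)
    assume "f a \<noteq> 0"
    have "(\<lambda>b. (1 / f a) * (f a * g b)) summable_on B" by (rule summable_on_cmult_right[OF s1[OF that]])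
    then show "g summable_on B" using \<open>f a \<noteq> 0\<close> by simp
  qed
  have "infsum (\<lambda>(a,b). f a * g b) (A \<times> B) = infsum (\<lambda>a. infsum (\<lambda>b. f a * g b) B) A"
    using infsum_Sigma_banach[of "\<lambda>(a,b). f a * g b" A "\<lambda>_. B"] s by simp
  also have "\<dots> = infsum (\<lambda>a. f a * infsum g B) A"
    by (rule infsum_cong) (simp add: inner)
  also have "\<dots> = infsum f A * infsum g B"
  proof (rule infsum_cmult_left)
    assume G: "infsum g B \<noteq> 0"
    have "\<exists>b0\<in>B. g b0 \<noteq> 0"
    proof (rule ccontr)
      assume "\<not> (\<exists>b0\<in>B. g b0 \<noteq> 0)"
      then have "infsum g B = 0" by (intro infsum_0) auto
      then show False using G by simp
    qed
    then obtain b0 where b0: "b0 \<in> B" "g b0 \<noteq> 0" by blast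
    have "(\<lambda>(a,b). f a * g b) summable_on A \<times> {b0}"
      by (rule summable_on_subset_banach[OF s]) (use b0 in auto)
    moreover have "A \<times> {b0} = (\<lambda>a. (a, b0)) ` A" by auto
    ultimately have "((\<lambda>(a,b). f a * g b) \<circ> (\<lambda>a. (a, b0))) summable_on A"
      by (subst summable_on_reindex[symmetric]) (auto simp: inj_on_def)
    then have "(\<lambda>a. (1 / g b0) * (f a * g b0)) summable_on A"
      by (intro summable_on_cmult_right) (simp add: o_def)
    then show "f summable_on A" using b0 by simp
  qed
  finally show ?thesis by simp
qed


lemma Pq_pos: "Q > 0 \<Longrightarrow> Pq Q xs > 0" unfolding Pq_def by (rule prod_pos) simp
lemma Ap_nonneg: "Ap J \<beta> Q n ms ss \<ge> 0" unfolding Ap_def by (rule prod_nonneg) simp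
lemma Bp_nonneg: "Bp J \<beta> Q n ls rs \<ge> 0" unfolding Bp_def by (rule prod_nonneg) simp

lemma inner_sum:
  fixes q c \<beta> :: real and J :: "int \<Rightarrow> real" and n :: int
  assumes q: "q > 0" and b: "\<beta> \<ge> 0" and x: "(ls, ms) \<in> Kset"
    and sumf: "(\<lambda>y. Gn J \<beta> q c n (Psi ((ls, ms), y))) summable_on (adm_r ls \<times> adm_s ms)"
  shows "infsum (\<lambda>y. Gn J \<beta> q c n (Psi ((ls, ms), y))) (adm_r ls \<times> adm_s ms) =
    Pq (q^2) ls * Pq (q^2) ms * (exp (\<beta> * J n) * A_R J \<beta> (q^2) n ms * B_L J \<beta> (q^2) n ls
       + (exp (- \<beta> * J n) - exp (\<beta> * J n)) * a_R J \<beta> (q^2) n ms * b_L J \<beta> (q^2) n ls)"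
proof -
  define R where "R = adm_r ls"
  define S where "S = adm_s ms"
  define Pl where "Pl = Pq (q^2) ls"
  define Pm where "Pm = Pq (q^2) ms"
  have Plp: "Pl > 0" and Pmp: "Pm > 0" using q by (simp_all add: Pl_def Pm_def Pq_pos)
  define bb where "bb rs = Bp J \<beta> (q^2) n ls rs" for rs
  define aa where "aa ss = Ap J \<beta> (q^2) n ms ss" for ss
  define bb' where "bb' rs = (if rs!0 < 0 then 1 else 0) * bb rs" for rs :: "int list"
  define aa' where "aa' ss = (if ss!0 > 1 then 1 else 0) * aa ss" for ss :: "int list"
  define g where "g = (\<lambda>(rs, ss). bb rs * aa ss)"
  define h where "h = (\<lambda>(rs, ss). bb' rs * aa' ss)"
  define F where "F = (\<lambda>y. Gn J \<beta> q c n (Psi ((ls, ms), y)))"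
  define ep where "ep = exp (\<beta> * J n)"
  define em where "em = exp (- \<beta> * J n)"
  have gnn: "g y \<ge> 0" for y by (auto simp: g_def bb_def aa_def Ap_nonneg Bp_nonneg split: prod.splits)
  have hnn: "h y \<ge> 0" for y by (auto simp: h_def bb'_def aa'_def bb_def aa_def Ap_nonneg Bp_nonneg split: prod.splits)
  have hg: "h y \<le> g y" for y
    by (auto simp: h_def g_def bb'_def aa'_def bb_def aa_def Ap_nonneg Bp_nonneg mult_nonneg_nonneg split: prod.splits)
  have Fid: "F y = Pl * Pm * (if fst y ! 0 < 0 \<and> snd y ! 0 > 1 then em else ep) * g y" if "y \<in> R \<times> S" for y
  proof -
    obtain rs ss where y: "y = (rs, ss)" by (cases y)
    have "((ls, ms), (rs, ss)) \<in> Iset" using x that y by (simp add: Iset_def R_def S_def)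
    from config_identity[OF q this, of J \<beta> c n] show ?thesis
      by (simp add: F_def Psi_def y Pl_def Pm_def em_def ep_def g_def bb_def aa_def mult_ac)
  qed
  have Fsplit: "F y = Pl * Pm * (ep * g y + (em - ep) * h y)" if "y \<in> R \<times> S" for y
    using Fid[OF that] by (cases y) (auto simp: g_def h_def bb'_def aa'_def algebra_simps)
  define C where "C = exp (\<beta> * \<bar>J n\<bar>) / (Pl * Pm)"
  have gle: "g y \<le> C * F y" if "y \<in> R \<times> S" for y
  proof -
    define gam where "gam = (if fst y ! 0 < 0 \<and> snd y ! 0 > 1 then em else ep)"
    have "exp (\<beta> * \<bar>J n\<bar>) * gam \<ge> 1"
    proof -
      have "\<beta> * \<bar>J n\<bar> - \<beta> * J n \<ge> 0" "\<beta> * \<bar>J n\<bar> + \<beta> * J n \<ge> 0" using b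
        by (simp_all add: right_diff_distrib[symmetric] distrib_left[symmetric] mult_nonneg_nonneg)
      then show ?thesis by (auto simp: gam_def em_def ep_def exp_add[symmetric])
    qed
    then have "g y \<le> (exp (\<beta> * \<bar>J n\<bar>) * gam) * g y" using gnn[of y] by (simp add: mult_le_cancel_right1)
    also have "\<dots> = C * F y" using Fid[OF that] Plp Pmp by (simp add: C_def gam_def field_simps)
    finally show ?thesis .
  qed
  have Fs: "F summable_on R \<times> S" using sumf by (simp add: F_def R_def S_def)
  have gs: "g summable_on R \<times> S"
    by (rule summable_on_comparison_test[OF summable_on_cmult_right[OF Fs, of C]]) (use gle gnn in auto)
  have hs: "h summable_on R \<times> S"
    by (rule summable_on_comparison_test[OF gs]) (use hg hnn in auto)
  have "infsum F (R \<times> S) = infsum (\<lambda>y. Pl * Pm * (ep * g y + (em - ep) * h y)) (R \<times> S)"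
    by (rule infsum_cong) (simp add: Fsplit)
  also have "\<dots> = Pl * Pm * (ep * infsum g (R \<times> S) + (em - ep) * infsum h (R \<times> S))"
    using gs hs by (simp add: infsum_cmult_right infsum_add summable_on_cmult_right summable_on_add)
  also have "infsum g (R \<times> S) = infsum bb R * infsum aa S"
    using infsum_product_real[of bb aa R S] gs unfolding g_def by simp
  also have "infsum h (R \<times> S) = infsum bb' R * infsum aa' S"
    using infsum_product_real[of bb' aa' R S] hs unfolding h_def by simp
  also have "infsum bb R = B_L J \<beta> (q^2) n ls" by (simp add: B_L_def bb_def[abs_def] Bp_def R_def)
  also have "infsum aa S = A_R J \<beta> (q^2) n ms" by (simp add: A_R_def aa_def[abs_def] Ap_def S_def)
  also have "infsum bb' R = b_L J \<beta> (q^2) n ls" by (simp add: b_L_def bb'_def[abs_def] bb_def Bp_def R_def)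
  also have "infsum aa' S = a_R J \<beta> (q^2) n ms" by (simp add: a_R_def aa'_def[abs_def] aa_def Ap_def S_def)
  finally show ?thesis by (simp add: F_def R_def S_def Pl_def Pm_def ep_def em_def mult_ac)
qed

theorem lemma4p2:
  fixes c \<beta> q Q :: real and J :: "int \<Rightarrow> real" and n :: int
  assumes "\<beta> \<ge> 0" and "0 < q" and "q < 1" and "Q = q^2"
    and "(\<lambda>i::int. 1 / (1 + q powr (2 * (real_of_int i - c)) * exp (\<beta> * J (i - 1))
            / (exp (\<beta> * \<bar>J i\<bar>) + q^2 * exp (\<beta> * \<bar>J (i - 2)\<bar>)))) summable_on {..0}"
    and "(\<lambda>i::int. 1 / (1 + q powr (- 2 * (real_of_int i - c)) * exp (\<beta> * J (i - 1))
            / (exp (\<beta> * \<bar>J i\<bar>) + q powr (-2) * exp (\<beta> * \<bar>J (i - 2)\<bar>)))) summable_on {1..}"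
  shows "Zpart J \<beta> q c * mu_exp J \<beta> q c
            (\<lambda>\<sigma>. (if Nfun \<sigma> = 0 then 1 else 0) * exp (- \<beta> * H_n J n \<sigma>))
       = exp (- \<beta> * J n) +
         (\<Sum>\<^sub>\<infinity>(ls, ms)\<in>{(ls, ms). ls \<noteq> [] \<and> ms \<noteq> [] \<and> (\<forall>x\<in>set ls. x \<ge> 1) \<and>
                 (\<forall>x\<in>set ms. x \<ge> 1) \<and> sum_list ms = sum_list ls}.
            (\<Prod>j<length ls. Q powr (real (ls!j) * (real (ls!j) - 1) / 2)) *
            (\<Prod>j<length ms. Q powr (real (ms!j) * (real (ms!j) - 1) / 2)) *
            (exp (\<beta> * J n) * A_R J \<beta> Q n ms * B_L J \<beta> Q n ls
             + (exp (- \<beta> * J n) - exp (\<beta> * J n)) * a_R J \<beta> Q n ms * b_L J \<beta> Q n ls))"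
proof -
  note h = assms(1,2,3,5,6)
  have Qq: "Q = q^2" by (rule assms(4))
  define W where "W = (\<lambda>\<sigma>. weight J \<beta> q c \<sigma> * ((if Nfun \<sigma> = 0 then 1 else 0) * exp (- \<beta> * H_n J n \<sigma>)))"
  have Zp: "Zpart J \<beta> q c > 0" by (rule Zpart_pos[OF h])
  have LHS: "Zpart J \<beta> q c * mu_exp J \<beta> q c (\<lambda>\<sigma>. (if Nfun \<sigma> = 0 then 1 else 0) * exp (- \<beta> * H_n J n \<sigma>))
     = infsum W configB"
    using Zp by (simp add: mu_exp_def W_def)
  have Gs: "Gn J \<beta> q c n summable_on {D. finite D}" by (rule Gn_summable[OF h])
  have s1: "infsum W configB = infsum (W \<circ> cfg) {D. finite D}"
    unfolding configB_image by (rule infsum_reindex) (rule inj_on_subset[OF inj_cfg], simp)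
  have Nf: "Nfun (cfg D) = 0 \<longleftrightarrow> D \<in> insert {} Eset" if "finite D" for D
    using that by (auto simp: Nfun_cfg Eset_def)
  have WD: "W (cfg D) = (if Nfun (cfg D) = 0 then Gn J \<beta> q c n D else 0)" for D
    unfolding W_def by (rule weightF_cfg)
  have s2: "infsum (W \<circ> cfg) {D. finite D} = infsum (Gn J \<beta> q c n) (insert {} Eset)"
  proof (rule infsum_cong_neutral)
    fix D assume "D \<in> insert {} Eset - {D. finite D}"
    then show "Gn J \<beta> q c n D = 0" by (auto simp: Eset_def)
  next
    fix D assume "D \<in> {D. finite D} - insert {} Eset"
    then show "(W \<circ> cfg) D = 0" using Nf by (simp add: WD)
  next
    fix D assume "D \<in> {D. finite D} \<inter> insert {} Eset"
    then have "finite D" "D \<in> insert {} Eset" by auto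
    then have "Nfun (cfg D) = 0" using Nf by blast
    then show "(W \<circ> cfg) D = Gn J \<beta> q c n D" by (simp add: WD)
  qed
  have EsubF: "Eset \<subseteq> {D. finite D}" by (auto simp: Eset_def)
  have GsE: "Gn J \<beta> q c n summable_on Eset" by (rule summable_on_subset_banach[OF Gs EsubF])
  have s3: "infsum (Gn J \<beta> q c n) (insert {} Eset) = Gn J \<beta> q c n {} + infsum (Gn J \<beta> q c n) Eset"
    by (rule infsum_insert[OF GsE]) (simp add: Eset_def)
  have ifs0: "ifs (cfg {}) = {0}" by (auto simp: ifs_def cfg_def gs_def)
  have s4: "Gn J \<beta> q c n {} = exp (- \<beta> * J n)"
    using h(2) by (simp add: Gn_def ifs0 fc_cfg)
  have s5: "infsum (Gn J \<beta> q c n) Eset = infsum (Gn J \<beta> q c n \<circ> Psi) Iset"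
    unfolding Psi_image[symmetric] by (rule infsum_reindex[OF inj_Psi])
  have sI: "(Gn J \<beta> q c n \<circ> Psi) summable_on Iset"
    using GsE unfolding Psi_image[symmetric] by (subst (asm) summable_on_reindex[OF inj_Psi])
  define B where "B = (\<lambda>(ls::nat list, ms::nat list). adm_r ls \<times> adm_s ms)"
  have IS: "Iset = Sigma Kset B" by (simp add: Iset_def B_def)
  have s6: "infsum (Gn J \<beta> q c n \<circ> Psi) Iset
      = infsum (\<lambda>x. infsum (\<lambda>y. (Gn J \<beta> q c n \<circ> Psi) (x, y)) (B x)) Kset"
    unfolding IS by (rule infsum_Sigma_banach[symmetric]) (use sI IS in simp)
  have s7: "infsum (\<lambda>y. (Gn J \<beta> q c n \<circ> Psi) (x, y)) (B x) =
     (case x of (ls, ms) \<Rightarrow>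
            (\<Prod>j<length ls. Q powr (real (ls!j) * (real (ls!j) - 1) / 2)) *
            (\<Prod>j<length ms. Q powr (real (ms!j) * (real (ms!j) - 1) / 2)) *
            (exp (\<beta> * J n) * A_R J \<beta> Q n ms * B_L J \<beta> Q n ls
             + (exp (- \<beta> * J n) - exp (\<beta> * J n)) * a_R J \<beta> Q n ms * b_L J \<beta> Q n ls))"
    if x: "x \<in> Kset" for x
  proof -
    obtain ls ms where xx: "x = (ls, ms)" by (cases x)
    have "(\<lambda>(x, y). Gn J \<beta> q c n (Psi (x, y))) summable_on Sigma Kset B"
      using sI IS by (simp add: o_def case_prod_unfold)
    from summable_on_SigmaD1[OF this x]
    have sf: "(\<lambda>y. Gn J \<beta> q c n (Psi ((ls, ms), y))) summable_on (adm_r ls \<times> adm_s ms)"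
      by (simp add: xx B_def)
    have "(ls, ms) \<in> Kset" using x xx by simp
    from inner_sum[OF h(2) h(1) this sf]
    show ?thesis by (simp add: xx B_def Qq Pq_def)
  qed
  have s8: "infsum (\<lambda>x. infsum (\<lambda>y. (Gn J \<beta> q c n \<circ> Psi) (x, y)) (B x)) Kset =
     infsum (\<lambda>x. case x of (ls, ms) \<Rightarrow>
            (\<Prod>j<length ls. Q powr (real (ls!j) * (real (ls!j) - 1) / 2)) *
            (\<Prod>j<length ms. Q powr (real (ms!j) * (real (ms!j) - 1) / 2)) *
            (exp (\<beta> * J n) * A_R J \<beta> Q n ms * B_L J \<beta> Q n ls
             + (exp (- \<beta> * J n) - exp (\<beta> * J n)) * a_R J \<beta> Q n ms * b_L J \<beta> Q n ls)) Kset"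
    by (rule infsum_cong) (rule s7)
  show ?thesis unfolding LHS s1 s2 s3 s4 s5 s6 s8 by (simp only: Kset_def)
qed


end
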